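(* Let $G$ be a group, $U$ a nonlocal vertex algebra on which $G$ acts by automorphisms, and $V=\coprod_{g\in G}V[g]$ a nonlocal vertex $G$-graded algebra. Assume that both $U$ and $V$ are irreducible nonlocal vertex algebras and that $U$ has countable dimension over $\mathbb{C}$. Then $U\sharp_GV$ is an irreducible nonlocal vertex algebra.
   Context: A nonlocal vertex algebra is a complex vector space $V$ with vector $\mathbf{1}$ and linear $Y:V\to\mathrm{Hom}(V,V((x)))$, $Y(v,x)=\sum_nv_nx^{-n-1}$, with $Y(\mathbf{1},x)v=v$, $Y(v,x)\mathbf{1}\in V[[x]]$ with constant term $v$, and weak associativity $(x_0+x_2)^lY(u,x_0+x_2)Y(v,x_2)w=(x_0+x_2)^lY(Y(u,x_0)v,x_2)w$ for some $l\ge0$. It is irreducible if $V$, as a module over itself via $Y$, has no submodules other than $0$ and $V$. A nonlocal vertex $G$-graded algebra ($e$ the identity of $G$) is a nonlocal vertex algebra $V=\coprod_gV[g]$ with $\mathbf{1}\in V[e]$ and $Y(u,x)v\in V[gh]((x))$ for $u\in V[g]$, $v\in V[h]$. The smash product $U\sharp_GV$ is $U\otimes V$ with vacuum $\mathbf{1}\otimes\mathbf{1}$ and $Y_\sharp(u\otimes v,x)(u'\otimes v')=Y(u,x)g(u')\otimes Y(v,x)v'$ for $u,u'\in U$, $v\in V[g]$, $v'\in V$; it is a nonlocal vertex algebra. *)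

theory Defs
  imports "HOL-Analysis.Analysis" "HOL-Algebra.Group" "HOL-Library.Groups_Big_Fun"
begin

(* A complex vector space is a type 'v::ab_group_add together with a scalar
   multiplication sc :: complex => 'v => 'v satisfying vector_space sc.
   A vertex operator Y(u,x)v = sum_n u_n v x^(-n-1) is encoded by its modes:
   Y u v n = u_n v. *)

definition bilin :: "(complex \<Rightarrow> 'a::ab_group_add \<Rightarrow> 'a) \<Rightarrow> (complex \<Rightarrow> 'b::ab_group_add \<Rightarrow> 'b)
   \<Rightarrow> (complex \<Rightarrow> 'c::ab_group_add \<Rightarrow> 'c) \<Rightarrow> ('a \<Rightarrow> 'b \<Rightarrow> 'c) \<Rightarrow> bool" where
  "bilin sa sb sc f \<longleftrightarrow> (\<forall>b. Vector_Spaces.linear sa sc (\<lambda>a. f a b)) \<and> (\<forall>a. Vector_Spaces.linear sb sc (f a))"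

(* Y(u,x)v \<in> V((x)) : truncation from above of the modes *)
definition truncated :: "('v::zero \<Rightarrow> 'v \<Rightarrow> int \<Rightarrow> 'v) \<Rightarrow> bool" where
  "truncated Y \<longleftrightarrow> (\<forall>u v. \<exists>N. \<forall>n\<ge>N. Y u v n = 0)"

(* coefficient of x0^c x2^d in Y(u,x0+x2)Y(v,x2)w, where (x0+x2)^k is expanded
   in nonnegative powers of x2: Y(u,x0+x2) = sum_m u_m sum_j binom(-m-1,j) x0^(-m-1-j) x2^j *)
definition prod_coeff :: "(complex \<Rightarrow> 'v \<Rightarrow> 'v) \<Rightarrow> ('v::ab_group_add \<Rightarrow> 'v \<Rightarrow> int \<Rightarrow> 'v)
    \<Rightarrow> 'v \<Rightarrow> 'v \<Rightarrow> 'v \<Rightarrow> int \<Rightarrow> int \<Rightarrow> 'v" where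
  "prod_coeff sc Y u v w c d =
     Sum_any (\<lambda>j::nat. sc ((of_int (c + int j) :: complex) gchoose j)
                           (Y u (Y v w (int j - d - 1)) (- c - 1 - int j)))"

(* coefficient of x0^c x2^d in Y(Y(u,x0)v,x2)w *)
definition iter_coeff :: "('v \<Rightarrow> 'v \<Rightarrow> int \<Rightarrow> 'v) \<Rightarrow> 'v \<Rightarrow> 'v \<Rightarrow> 'v \<Rightarrow> int \<Rightarrow> int \<Rightarrow> 'v" where
  "iter_coeff Y u v w c d = Y (Y u v (- c - 1)) w (- d - 1)"

(* coefficient of x0^a x2^b in (x0+x2)^l F, where F has coefficients F c d *)
definition mult_binom :: "(complex \<Rightarrow> 'v \<Rightarrow> 'v) \<Rightarrow> nat \<Rightarrow> (int \<Rightarrow> int \<Rightarrow> 'v::ab_group_add) \<Rightarrow> int \<Rightarrow> int \<Rightarrow> 'v" where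
  "mult_binom sc l F a b = (\<Sum>t\<le>l. sc (of_nat (l choose t)) (F (a - int (l - t)) (b - int t)))"

definition weak_assoc :: "(complex \<Rightarrow> 'v \<Rightarrow> 'v) \<Rightarrow> ('v::ab_group_add \<Rightarrow> 'v \<Rightarrow> int \<Rightarrow> 'v) \<Rightarrow> bool" where
  "weak_assoc sc Y \<longleftrightarrow> (\<forall>u v w. \<exists>l::nat. \<forall>a b.
      mult_binom sc l (prod_coeff sc Y u v w) a b = mult_binom sc l (iter_coeff Y u v w) a b)"

definition nva :: "(complex \<Rightarrow> 'v \<Rightarrow> 'v) \<Rightarrow> ('v::ab_group_add \<Rightarrow> 'v \<Rightarrow> int \<Rightarrow> 'v) \<Rightarrow> 'v \<Rightarrow> bool" where
  "nva sc Y vac \<longleftrightarrow>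
     vector_space sc \<and>
     (\<forall>n. bilin sc sc sc (\<lambda>u v. Y u v n)) \<and>
     truncated Y \<and>
     (\<forall>v n. Y vac v n = (if n = -1 then v else 0)) \<and>
     (\<forall>v n. n \<ge> 0 \<longrightarrow> Y v vac n = 0) \<and>
     (\<forall>v. Y v vac (-1) = v) \<and>
     weak_assoc sc Y"

definition nva_irreducible :: "(complex \<Rightarrow> 'v \<Rightarrow> 'v) \<Rightarrow> ('v::ab_group_add \<Rightarrow> 'v \<Rightarrow> int \<Rightarrow> 'v) \<Rightarrow> 'v \<Rightarrow> bool" where
  "nva_irreducible sc Y vac \<longleftrightarrow> nva sc Y vac \<and>
     (\<forall>S. module.subspace sc S \<and> (\<forall>u w n. w \<in> S \<longrightarrow> Y u w n \<in> S) \<longrightarrow> S = {0} \<or> S = UNIV)"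

definition nva_aut :: "(complex \<Rightarrow> 'v \<Rightarrow> 'v) \<Rightarrow> ('v::ab_group_add \<Rightarrow> 'v \<Rightarrow> int \<Rightarrow> 'v) \<Rightarrow> 'v \<Rightarrow> ('v \<Rightarrow> 'v) \<Rightarrow> bool" where
  "nva_aut sc Y vac \<sigma> \<longleftrightarrow> bij \<sigma> \<and> Vector_Spaces.linear sc sc \<sigma> \<and> \<sigma> vac = vac \<and>
     (\<forall>u v n. \<sigma> (Y u v n) = Y (\<sigma> u) (\<sigma> v) n)"

definition nva_group_action :: "('g, 'b) monoid_scheme \<Rightarrow> (complex \<Rightarrow> 'u \<Rightarrow> 'u) \<Rightarrow> ('u::ab_group_add \<Rightarrow> 'u \<Rightarrow> int \<Rightarrow> 'u)
     \<Rightarrow> 'u \<Rightarrow> ('g \<Rightarrow> 'u \<Rightarrow> 'u) \<Rightarrow> bool" where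
  "nva_group_action G sc Y vac act \<longleftrightarrow>
     (\<forall>g\<in>carrier G. nva_aut sc Y vac (act g)) \<and>
     act \<one>\<^bsub>G\<^esub> = id \<and>
     (\<forall>g\<in>carrier G. \<forall>h\<in>carrier G. act (g \<otimes>\<^bsub>G\<^esub> h) = act g \<circ> act h)"

definition graded_direct_sum :: "('g, 'b) monoid_scheme \<Rightarrow> (complex \<Rightarrow> 'v \<Rightarrow> 'v) \<Rightarrow> ('g \<Rightarrow> 'v::ab_group_add set) \<Rightarrow> bool" where
  "graded_direct_sum G sc Vg \<longleftrightarrow>
     (\<forall>g\<in>carrier G. module.subspace sc (Vg g)) \<and>
     (\<forall>v. \<exists>!c::'g \<Rightarrow> 'v. (\<forall>g. c g \<in> (if g \<in> carrier G then Vg g else {0})) \<and>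
                     finite {g. c g \<noteq> 0} \<and> v = sum c {g. c g \<noteq> 0})"

definition nva_G_graded :: "('g, 'b) monoid_scheme \<Rightarrow> (complex \<Rightarrow> 'v \<Rightarrow> 'v) \<Rightarrow> ('v::ab_group_add \<Rightarrow> 'v \<Rightarrow> int \<Rightarrow> 'v)
     \<Rightarrow> 'v \<Rightarrow> ('g \<Rightarrow> 'v set) \<Rightarrow> bool" where
  "nva_G_graded G sc Y vac Vg \<longleftrightarrow> nva sc Y vac \<and> graded_direct_sum G sc Vg \<and>
     vac \<in> Vg \<one>\<^bsub>G\<^esub> \<and>
     (\<forall>g\<in>carrier G. \<forall>h\<in>carrier G. \<forall>u\<in>Vg g. \<forall>v\<in>Vg h. \<forall>n. Y u v n \<in> Vg (g \<otimes>\<^bsub>G\<^esub> h))"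

definition countable_dim :: "(complex \<Rightarrow> 'v::ab_group_add \<Rightarrow> 'v) \<Rightarrow> bool" where
  "countable_dim sc \<longleftrightarrow> (\<exists>B. countable B \<and> \<not> module.dependent sc B \<and> module.span sc B = UNIV)"

(* (W, t) is a tensor product of U and V: t bilinear, its image spans W, and
   every bilinear form on U x V factors through t (equivalent to the universal
   property; uniqueness of the factorization follows from spanning). *)
definition is_tensor_product :: "(complex \<Rightarrow> 'u::ab_group_add \<Rightarrow> 'u) \<Rightarrow> (complex \<Rightarrow> 'v::ab_group_add \<Rightarrow> 'v)
     \<Rightarrow> (complex \<Rightarrow> 'w::ab_group_add \<Rightarrow> 'w) \<Rightarrow> ('u \<Rightarrow> 'v \<Rightarrow> 'w) \<Rightarrow> bool" where
  "is_tensor_product su sv sw t \<longleftrightarrow> vector_space sw \<and> bilin su sv sw t \<and>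
     module.span sw {t u v | u v. True} = UNIV \<and>
     (\<forall>\<beta>::'u \<Rightarrow> 'v \<Rightarrow> complex. bilin su sv (*) \<beta> \<longrightarrow>
        (\<exists>\<phi>. Vector_Spaces.linear sw (*) \<phi> \<and> (\<forall>u v. \<beta> u v = \<phi> (t u v))))"

(* YW is the smash-product vertex operator on W = U (x) V:
   Y#(u(x)v,x)(u'(x)v') = Y(u,x)g(u') (x) Y(v,x)v'  for v in V[g];
   coefficientwise: (u(x)v)_n (u'(x)v') = sum_i (u_i g(u')) (x) (v_(n-1-i) v'). *)
definition is_smash_Y :: "('g, 'b) monoid_scheme \<Rightarrow> ('g \<Rightarrow> 'u \<Rightarrow> 'u) \<Rightarrow> ('u \<Rightarrow> 'u \<Rightarrow> int \<Rightarrow> 'u)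
     \<Rightarrow> ('v \<Rightarrow> 'v \<Rightarrow> int \<Rightarrow> 'v) \<Rightarrow> ('g \<Rightarrow> 'v set) \<Rightarrow> (complex \<Rightarrow> 'w::ab_group_add \<Rightarrow> 'w)
     \<Rightarrow> ('u \<Rightarrow> 'v \<Rightarrow> 'w) \<Rightarrow> ('w \<Rightarrow> 'w \<Rightarrow> int \<Rightarrow> 'w) \<Rightarrow> bool" where
  "is_smash_Y G act YU YV Vg sw t YW \<longleftrightarrow>
     (\<forall>n. bilin sw sw sw (\<lambda>a b. YW a b n)) \<and>
     (\<forall>g\<in>carrier G. \<forall>v\<in>Vg g. \<forall>u u' v' n.
        YW (t u v) (t u' v') n = Sum_any (\<lambda>i::int. t (YU u (act g u') i) (YV v v' (n - 1 - i))))"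

end

theory Submission
  imports Defs "HOL-Computational_Algebra.Polynomial" "HOL-Computational_Algebra.Fundamental_Theorem_Algebra"
    "HOL-Computational_Algebra.Formal_Power_Series"
begin


lemma lin_add: "Vector_Spaces.linear s1 s2 f \<Longrightarrow> f (x + y) = f x + f y"
  by (simp add: Vector_Spaces.linear_iff)
lemma lin_scale: "Vector_Spaces.linear s1 s2 f \<Longrightarrow> f (s1 c x) = s2 c (f x)"
  by (simp add: Vector_Spaces.linear_iff)
lemma lin_zero: "Vector_Spaces.linear s1 s2 f \<Longrightarrow> f 0 = 0"
  using module_hom.zero[of s1 s2 f] by (simp add: module_hom_iff_linear)
lemma lin_diff: "Vector_Spaces.linear s1 s2 f \<Longrightarrow> f (x - y) = f x - f y"
  using module_hom.diff[of s1 s2 f] by (simp add: module_hom_iff_linear)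
lemma lin_neg: "Vector_Spaces.linear s1 s2 f \<Longrightarrow> f (- x) = - f x"
  using module_hom.neg[of s1 s2 f] by (simp add: module_hom_iff_linear)
lemma lin_sum: "Vector_Spaces.linear s1 s2 f \<Longrightarrow> f (sum g A) = (\<Sum>a\<in>A. f (g a))"
  using module_hom.sum[of s1 s2 f] by (simp add: module_hom_iff_linear)

lemma vs_complex: "vector_space ((*) :: complex \<Rightarrow> complex \<Rightarrow> complex)"
  by unfold_locales (auto simp: algebra_simps)

context vector_space
begin

lemma countable_independent:
  assumes B: "countable B" "span B = UNIV" and A: "independent A"
  shows "countable A"
proof -
  have "\<forall>a. \<exists>F. finite F \<and> F \<subseteq> B \<and> a \<in> span F"
  proof
    fix a
    have "a \<in> span B" using B by auto
    then obtain t r where "a = (\<Sum>x\<in>t. r x *s x)" "finite t" "t \<subseteq> B"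
      unfolding span_explicit by blast
    then show "\<exists>F. finite F \<and> F \<subseteq> B \<and> a \<in> span F"
      by (intro exI[of _ t]) (auto intro!: span_sum span_scale span_base simp: span_explicit)
  qed
  then obtain F where F: "\<And>a. finite (F a) \<and> F a \<subseteq> B \<and> a \<in> span (F a)" by metis
  have "A \<subseteq> (\<Union>T\<in>{T. finite T \<and> T \<subseteq> B}. {a\<in>A. F a = T})" using F by auto
  moreover have "countable (\<Union>T\<in>{T. finite T \<and> T \<subseteq> B}. {a\<in>A. F a = T})"
  proof (rule countable_UN)
    show "countable {T. finite T \<and> T \<subseteq> B}" by (rule countable_Collect_finite_subset[OF B(1)])
    fix T assume T: "T \<in> {T. finite T \<and> T \<subseteq> B}"
    have "{a\<in>A. F a = T} \<subseteq> span T" using F by auto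
    moreover have "independent {a\<in>A. F a = T}" using A by (rule independent_mono) auto
    ultimately have "finite {a\<in>A. F a = T}" using independent_span_bound[of T] T by auto
    then show "countable {a\<in>A. F a = T}" by (rule countable_finite)
  qed
  ultimately show ?thesis by (rule countable_subset)
qed

end

definition pev :: "(complex \<Rightarrow> 'u \<Rightarrow> 'u) \<Rightarrow> ('u \<Rightarrow> 'u) \<Rightarrow> complex poly \<Rightarrow> 'u \<Rightarrow> 'u::ab_group_add" where
  "pev sc f p x = (\<Sum>i\<le>degree p. sc (coeff p i) ((f ^^ i) x))"

locale cvs = vector_space sc for sc :: "complex \<Rightarrow> 'u::ab_group_add \<Rightarrow> 'u"
begin

lemma funpow_linear: "Vector_Spaces.linear sc sc f \<Longrightarrow> Vector_Spaces.linear sc sc (f ^^ i)"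
proof (induction i)
  case 0 then show ?case using vector_space_axioms by (simp add: Vector_Spaces.linear_iff id_def)
next
  case (Suc i)
  have "f ^^ Suc i = f o (f ^^ i)" by simp
  then show ?case using Vector_Spaces.linear_compose[OF Suc.IH[OF Suc.prems] Suc.prems] by (simp add: comp_def)
qed

lemma pev_bound: "degree p \<le> N \<Longrightarrow> pev sc f p x = (\<Sum>i\<le>N. sc (coeff p i) ((f ^^ i) x))"
  unfolding pev_def
  by (rule sum.mono_neutral_left) (auto simp: coeff_eq_0)

lemma pev_add: "pev sc f (p + q) x = pev sc f p x + pev sc f q x"
proof -
  let ?N = "max (degree p) (degree q)"
  have "degree (p + q) \<le> ?N" by (rule degree_add_le) auto
  then show ?thesis
    by (simp add: pev_bound[of _ ?N] scale_left_distrib sum.distrib)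
qed

lemma pev_smult: "pev sc f (smult a p) x = sc a (pev sc f p x)"
proof -
  have "degree (smult a p) \<le> degree p" by simp
  then show ?thesis
    by (simp add: pev_bound[of _ "degree p"] pev_def scale_sum_right)
qed

lemma pev_diff: "pev sc f (p - q) x = pev sc f p x - pev sc f q x"
  using pev_add[of f "p - q" q x] by (simp add: algebra_simps)

lemma pev_0[simp]: "pev sc f 0 x = 0"
  by (simp add: pev_def)

lemma pev_sum: "finite A \<Longrightarrow> pev sc f (\<Sum>i\<in>A. P i) x = (\<Sum>i\<in>A. pev sc f (P i) x)"
  by (induction A rule: finite_induct) (auto simp: pev_add)

lemma pev_const: "pev sc f [:c:] x = sc c x"
  by (simp add: pev_def)

lemma pev_linear:
  assumes lf: "Vector_Spaces.linear sc sc f"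
  shows "Vector_Spaces.linear sc sc (pev sc f p)"
proof -
  have l: "\<And>i. Vector_Spaces.linear sc sc (f ^^ i)" using funpow_linear[OF lf] .
  show ?thesis
    unfolding Vector_Spaces.linear_iff
    using vector_space_axioms
    by (auto simp: pev_def lin_add[OF l] lin_scale[OF l] scale_right_distrib sum.distrib
        scale_sum_right scale_left_commute mult.commute)
qed

lemma pev_pCons0:
  assumes lf: "Vector_Spaces.linear sc sc f"
  shows "pev sc f (pCons 0 p) x = f (pev sc f p x)"
proof -
  have "degree (pCons 0 p) \<le> Suc (degree p)" by (simp add: degree_pCons_le)
  then have "pev sc f (pCons 0 p) x = (\<Sum>i\<le>Suc (degree p). sc (coeff (pCons 0 p) i) ((f ^^ i) x))"
    by (rule pev_bound)
  also have "\<dots> = sc (coeff (pCons 0 p) 0) ((f ^^ 0) x) + (\<Sum>i\<le>degree p. sc (coeff (pCons 0 p) (Suc i)) ((f ^^ Suc i) x))"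
    by (rule sum.atMost_Suc_shift)
  also have "\<dots> = (\<Sum>i\<le>degree p. sc (coeff p i) (f ((f ^^ i) x)))"
    by simp
  also have "\<dots> = f (pev sc f p x)"
    by (simp add: pev_def lin_sum[OF lf] lin_scale[OF lf])
  finally show ?thesis .
qed

lemma pev_lin1:
  assumes lf: "Vector_Spaces.linear sc sc f"
  shows "pev sc f ([:-r, 1:] * p) x = f (pev sc f p x) - sc r (pev sc f p x)"
  by (simp add: pev_diff pev_smult pev_pCons0[OF lf])

lemma pev_comm:
  assumes lf: "Vector_Spaces.linear sc sc f"
  shows "pev sc f p (f x) = f (pev sc f p x)"
  by (simp add: pev_def lin_sum[OF lf] lin_scale[OF lf] funpow_swap1)

end

locale dix = cvs sc for sc :: "complex \<Rightarrow> 'u::ab_group_add \<Rightarrow> 'u" +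
  fixes Y :: "'u \<Rightarrow> 'u \<Rightarrow> int \<Rightarrow> 'u"
  assumes linY: "\<And>u n. Vector_Spaces.linear sc sc (\<lambda>w. Y u w n)"
    and irr: "\<And>S. subspace S \<Longrightarrow> (\<forall>u w n. w \<in> S \<longrightarrow> Y u w n \<in> S) \<Longrightarrow> S = {0} \<or> S = UNIV"
    and cdim: "\<exists>B. countable B \<and> independent B \<and> span B = UNIV"
begin

definition endo :: "('u \<Rightarrow> 'u) \<Rightarrow> bool" where
  "endo f \<longleftrightarrow> Vector_Spaces.linear sc sc f \<and> (\<forall>u w n. f (Y u w n) = Y u (f w) n)"

lemma schur:
  assumes "endo f" shows "(\<forall>x. f x = 0) \<or> bij f"
proof -
  have lf: "Vector_Spaces.linear sc sc f" using assms endo_def by auto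
  interpret lf: Vector_Spaces.linear sc sc f by fact
  have c: "\<And>u w n. f (Y u w n) = Y u (f w) n" using assms endo_def by auto
  have "subspace {x. f x = 0}" by (rule lf.subspace_kernel)
  moreover have "\<forall>u w n. w \<in> {x. f x = 0} \<longrightarrow> Y u w n \<in> {x. f x = 0}"
  proof (intro allI impI)
    fix u w n assume "w \<in> {x. f x = 0}"
    then show "Y u w n \<in> {x. f x = 0}"
      using c[of u w n] lin_zero[OF linY[of u n]] by simp
  qed
  ultimately have K: "{x. f x = 0} = {0} \<or> {x. f x = 0} = UNIV" by (rule irr)
  have "subspace (range f)" using lf.subspace_image[of UNIV] by simp
  moreover have "\<forall>u w n. w \<in> range f \<longrightarrow> Y u w n \<in> range f"
    using c by (metis rangeE rangeI)
  ultimately have R: "range f = {0} \<or> range f = UNIV" by (rule irr)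
  show ?thesis
  proof (cases "{x. f x = 0} = UNIV")
    case True then show ?thesis by auto
  next
    case False
    then have inj: "inj f" using K lf.inj_iff_eq_0 by auto
    show ?thesis
    proof (cases "range f = {0}")
      case True then show ?thesis by auto
    next
      case False then have "surj f" using R by auto
      then show ?thesis using inj bij_def by auto
    qed
  qed
qed

lemma endo_shift:
  assumes "endo f" shows "endo (\<lambda>x. f x - sc c x)"
proof -
  have lf: "Vector_Spaces.linear sc sc f" using assms endo_def by auto
  have "Vector_Spaces.linear sc sc (\<lambda>x. f x - sc c x)"
    using lf vector_space_axioms by (simp add: Vector_Spaces.linear_iff algebra_simps scale_right_diff_distrib
        scale_left_commute)
  moreover have "\<And>u w n. f (Y u w n) - sc c (Y u w n) = Y u (f w - sc c w) n"
    using assms endo_def lin_diff[OF linY] lin_scale[OF linY] by auto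
  ultimately show ?thesis unfolding endo_def by auto
qed

lemma pev_inj:
  assumes lf: "Vector_Spaces.linear sc sc f"
    and bj: "\<And>c. inj (\<lambda>x. f x - sc c x)"
    and p: "p \<noteq> 0" and z: "pev sc f p x = 0"
  shows "x = 0"
  using p z
proof (induction "degree p" arbitrary: p rule: less_induct)
  case less
  show ?case
  proof (cases "degree p = 0")
    case True
    then obtain c where pc: "p = [:c:]" by (metis degree_eq_zeroE)
    then have "c \<noteq> 0" using less by auto
    then show ?thesis using less pc by (simp add: pev_const)
  next
    case False
    then have "\<not> (\<exists>a l. a \<noteq> 0 \<and> l = 0 \<and> p = pCons a l)" by auto
    then obtain r where "poly p r = 0" using fundamental_theorem_of_algebra_alt by blast
    then obtain q where pq: "p = [:-r, 1:] * q" using poly_eq_0_iff_dvd by (metis dvdE)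
    then have q0: "q \<noteq> 0" using less by auto
    have d1: "degree ([:-r,1:]*q) = 1 + degree q"
      using degree_mult_eq[of "[:-r,1:]" q] q0 by (simp del: mult_pCons_left)
    have dq: "degree q < degree p" using d1 pq by (simp del: mult_pCons_left)
    have "f (pev sc f q x) - sc r (pev sc f q x) = 0" using less pq pev_lin1[OF lf] by simp
    then have "pev sc f q x = 0"
      using bj[of r] lin_zero[OF lf] by (metis (mono_tags, lifting) diff_self injD scale_zero_right)
    then show ?thesis using less(1)[OF dq q0] by simp
  qed
qed

lemma dixmier:
  assumes e: "endo f" shows "\<exists>c. \<forall>x. f x = sc c x"
proof (rule ccontr)
  assume nc: "\<not> (\<exists>c. \<forall>x. f x = sc c x)"
  have lf: "Vector_Spaces.linear sc sc f" using e endo_def by auto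
  define g where "g c = (\<lambda>x. f x - sc c x)" for c
  have bg: "bij (g c)" for c
  proof -
    have "endo (g c)" unfolding g_def by (rule endo_shift[OF e])
    moreover have "\<not> (\<forall>x. g c x = 0)" using nc unfolding g_def by auto
    ultimately show ?thesis using schur by blast
  qed
  obtain u0 where u0: "f u0 \<noteq> 0" using nc by (metis scale_zero_left)
  then have u00: "u0 \<noteq> 0" using lin_zero[OF lf] by auto
  define w where "w c = inv_into UNIV (g c) u0" for c
  have gw: "g c (w c) = u0" for c unfolding w_def using bg[of c] by (meson bij_inv_eq_iff)
  have fw: "f (w c) = u0 + sc c (w c)" for c using gw[of c] unfolding g_def by (simp add: algebra_simps)
  have injw: "inj w"
  proof (rule injI)
    fix c d assume "w c = w d"
    then have "sc c (w c) = sc d (w c)" using fw[of c] fw[of d] by auto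
    moreover have "w c \<noteq> 0" using gw[of c] u00 unfolding g_def by (auto simp: lin_zero[OF lf])
    ultimately show "c = d" by simp
  qed
  have indep: "independent (range w)"
    unfolding independent_explicit_finite_subsets
  proof (intro allI impI ballI)
    fix T a v assume T: "T \<subseteq> range w" "finite T" and sm: "(\<Sum>v\<in>T. sc (a v) v) = 0" and v: "v \<in> T"
    obtain L where L: "T = w ` L" "finite L" using T by (metis finite_subset_image)
    define c where "c l = a (w l)" for l
    have sm2: "(\<Sum>l\<in>L. sc (c l) (w l)) = 0"
      using sm L injw by (simp add: c_def sum.reindex inj_on_subset)
    define Q where "Q l = (\<Prod>k\<in>L - {l}. [:-k, 1:])" for l
    define P where "P = (\<Prod>k\<in>L. [:-k, 1:])"
    define q where "q = (\<Sum>l\<in>L. smult (c l) (Q l))"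
    have PQ: "l \<in> L \<Longrightarrow> P = [:-l, 1:] * Q l" for l
      unfolding P_def Q_def using L(2) by (simp add: prod.remove)
    have "pev sc f q u0 = (\<Sum>l\<in>L. sc (c l) (pev sc f (Q l) u0))"
      unfolding q_def using L(2) by (simp add: pev_sum pev_smult)
    also have "\<dots> = (\<Sum>l\<in>L. sc (c l) (pev sc f P (w l)))"
    proof (rule sum.cong[OF refl])
      fix l assume l: "l \<in> L"
      have "pev sc f P (w l) = f (pev sc f (Q l) (w l)) - sc l (pev sc f (Q l) (w l))"
        using PQ[OF l] pev_lin1[OF lf] by simp
      also have "\<dots> = pev sc f (Q l) (f (w l) - sc l (w l))"
        using pev_comm[OF lf] lin_diff[OF pev_linear[OF lf]] lin_scale[OF pev_linear[OF lf]] by simp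
      also have "\<dots> = pev sc f (Q l) u0" using gw[of l] unfolding g_def by simp
      finally show "sc (c l) (pev sc f (Q l) u0) = sc (c l) (pev sc f P (w l))" by simp
    qed
    also have "\<dots> = pev sc f P (\<Sum>l\<in>L. sc (c l) (w l))"
      by (simp add: lin_sum[OF pev_linear[OF lf]] lin_scale[OF pev_linear[OF lf]])
    also have "\<dots> = 0" using sm2 lin_zero[OF pev_linear[OF lf]] by simp
    finally have "pev sc f q u0 = 0" .
    moreover have "inj (\<lambda>x. f x - sc c x)" for c using bg[of c] unfolding g_def by (simp add: bij_is_inj)
    ultimately have q0: "q = 0" using pev_inj[OF lf] u00 by blast
    obtain l where l: "l \<in> L" "v = w l" using L v by auto
    have "poly q l = (\<Sum>m\<in>L. c m * poly (Q m) l)" unfolding q_def by (simp add: poly_sum)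
    also have "\<dots> = c l * poly (Q l) l + (\<Sum>m\<in>L-{l}. c m * poly (Q m) l)"
      using L(2) l by (simp add: sum.remove)
    also have "(\<Sum>m\<in>L-{l}. c m * poly (Q m) l) = 0"
      unfolding Q_def using L(2) l by (intro sum.neutral) (auto simp: poly_prod prod_zero_iff)
    finally have "c l * poly (Q l) l = 0" using q0 by simp
    moreover have "poly (Q l) l \<noteq> 0" unfolding Q_def using L(2) by (auto simp: poly_prod prod_zero_iff)
    ultimately have "c l = 0" by simp
    then show "a v = 0" using l c_def by simp
  qed
  obtain B where B: "countable B" "span B = UNIV" using cdim by auto
  have "countable (range w)" by (rule countable_independent[OF B indep])
  then have "countable (UNIV :: complex set)" using injw countable_image_inj_on by blast
  then show False using uncountable_UNIV_complex by simp
qed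

end


lemma Sum_any_pair:
  assumes "finite {(a, b). g a b \<noteq> (0::'c::comm_monoid_add)}"
  shows "Sum_any (\<lambda>a. Sum_any (\<lambda>b. g a b)) = Sum_any (\<lambda>(a, b). g a b)"
proof -
  let ?S = "{(a, b). g a b \<noteq> 0}"
  show ?thesis
  proof (rule Sum_any.cartesian_product[of "fst ` ?S \<times> snd ` ?S"])
    show "finite (fst ` ?S \<times> snd ` ?S)" using assms by auto
    show "{a. \<exists>b. g a b \<noteq> 0} \<times> {b. \<exists>a. g a b \<noteq> 0} \<subseteq> fst ` ?S \<times> snd ` ?S"
      by (auto simp: image_iff)
  qed
qed

lemma lin_Sum_any:
  assumes L: "Vector_Spaces.linear s1 s2 L" and f: "finite {x. f x \<noteq> 0}"
  shows "L (Sum_any f) = Sum_any (\<lambda>x. L (f x))"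
proof -
  have "Sum_any f = sum f {x. f x \<noteq> 0}" by (rule Sum_any.expand_superset[OF f]) simp
  moreover have "Sum_any (\<lambda>x. L (f x)) = sum (\<lambda>x. L (f x)) {x. f x \<noteq> 0}"
    by (rule Sum_any.expand_superset[OF f]) (auto simp: lin_zero[OF L])
  ultimately show ?thesis by (simp add: lin_sum[OF L])
qed

lemma Sum_any_triangle:
  fixes g :: "nat \<Rightarrow> nat \<Rightarrow> 'c::comm_monoid_add"
  assumes fin: "finite {(a, b). g a b \<noteq> 0}"
  shows "Sum_any (\<lambda>(a, b). g a b) = Sum_any (\<lambda>k. \<Sum>i\<le>k. g i (k - i))"
proof -
  let ?S = "{(a, b). g a b \<noteq> 0}"
  obtain N where N: "(\<lambda>(a, b). a + b) ` ?S \<subseteq> {..<N}"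
    using finite_nat_bounded[OF finite_imageI[OF fin]] by (rule exE)
  have S: "a + b < N" if "g a b \<noteq> 0" for a b
  proof -
    have "(a, b) \<in> ?S" using that by simp
    then have "(\<lambda>(a, b). a + b) (a, b) \<in> {..<N}" using N by blast
    then show ?thesis by simp
  qed
  have fT: "finite {(i, j). i + j < (N::nat)}"
    by (rule finite_subset[of _ "{..<N} \<times> {..<N}"]) auto
  have "Sum_any (\<lambda>(a, b). g a b) = (\<Sum>(i, j)\<in>{(i, j). i + j < N}. g i j)"
  proof (rule Sum_any.expand_superset[OF fT])
    show "{p. (case p of (a, b) \<Rightarrow> g a b) \<noteq> 0} \<subseteq> {(i, j). i + j < N}"
    proof
      fix p assume "p \<in> {p. (case p of (a, b) \<Rightarrow> g a b) \<noteq> 0}"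
      then show "p \<in> {(i, j). i + j < N}" using S by (cases p) simp
    qed
  qed
  also have "\<dots> = (\<Sum>k<N. \<Sum>i\<le>k. g i (k - i))" by (rule sum.triangle_reindex)
  also have "\<dots> = Sum_any (\<lambda>k. \<Sum>i\<le>k. g i (k - i))"
  proof (rule Sum_any.expand_superset[symmetric])
    show "finite {..<N}" by simp
    show "{a. (\<Sum>i\<le>a. g i (a - i)) \<noteq> 0} \<subseteq> {..<N}"
    proof
      fix k assume "k \<in> {a. (\<Sum>i\<le>a. g i (a - i)) \<noteq> 0}"
      then obtain i where "i \<le> k" "g i (k - i) \<noteq> 0"
        using sum.not_neutral_contains_not_neutral by blast
      then have "i + (k - i) < N" using S by blast
      then show "k \<in> {..<N}" using \<open>i \<le> k\<close> by simp
    qed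
  qed
  finally show ?thesis .
qed

definition Dop :: "(int \<Rightarrow> int \<Rightarrow> 'a::ab_group_add) \<Rightarrow> int \<Rightarrow> int \<Rightarrow> 'a" where
  "Dop F a b = F (a - 1) b + F a (b - 1)"

lemma mb_Dop:
  assumes vs: "vector_space sc"
  shows "mult_binom sc l F = (Dop ^^ l) F"
proof (induction l)
  case 0
  have "sc 1 x = x" for x using vs by (simp add: vector_space_def)
  then show ?case by (auto simp: mult_binom_def fun_eq_iff)
next
  case (Suc l)
  interpret vector_space sc by fact
  have "mult_binom sc (Suc l) F a b = Dop (mult_binom sc l F) a b" for a b
  proof -
    let ?X = "(\<Sum>t\<le>l. sc (of_nat (l choose t)) (F (a - int (l - t)) (b - 1 - int t)))"
    let ?Y = "(\<Sum>t<l. sc (of_nat (l choose Suc t)) (F (a - int (l - t)) (b - 1 - int t)))"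
    have "mult_binom sc (Suc l) F a b =
      (\<Sum>t\<le>Suc l. sc (of_nat (Suc l choose t)) (F (a - int (Suc l - t)) (b - int t)))"
      by (simp add: mult_binom_def)
    also have "\<dots> = sc 1 (F (a - int (Suc l)) b) +
        (\<Sum>t\<le>l. sc (of_nat (Suc l choose Suc t)) (F (a - int (l - t)) (b - int (Suc t))))"
      by (subst sum.atMost_Suc_shift) simp
    also have "\<dots> = F (a - int (Suc l)) b + ?X +
        (\<Sum>t\<le>l. sc (of_nat (l choose Suc t)) (F (a - int (l - t)) (b - 1 - int t)))"
      by (simp add: scale_left_distrib sum.distrib algebra_simps)
    also have "(\<Sum>t\<le>l. sc (of_nat (l choose Suc t)) (F (a - int (l - t)) (b - 1 - int t))) = ?Y"
      by (simp add: lessThan_Suc_atMost[symmetric])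
    finally have e1: "mult_binom sc (Suc l) F a b = F (a - int (Suc l)) b + ?X + ?Y" .
    have "mult_binom sc l F (a - 1) b = (\<Sum>t\<le>l. sc (of_nat (l choose t)) (F (a - 1 - int (l - t)) (b - int t)))"
      by (simp add: mult_binom_def)
    also have "\<dots> = sc 1 (F (a - 1 - int l) b) + (\<Sum>t<l. sc (of_nat (l choose Suc t)) (F (a - 1 - int (l - Suc t)) (b - int (Suc t))))"
      by (subst sum.atMost_shift) simp
    also have "(\<Sum>t<l. sc (of_nat (l choose Suc t)) (F (a - 1 - int (l - Suc t)) (b - int (Suc t)))) = ?Y"
      by (rule sum.cong) (auto simp: of_nat_diff algebra_simps)
    finally have e2: "mult_binom sc l F (a - 1) b = F (a - int (Suc l)) b + ?Y" by (simp add: algebra_simps)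
    have e3: "mult_binom sc l F a (b - 1) = ?X" by (simp add: mult_binom_def algebra_simps)
    show ?thesis using e1 e2 e3 by (simp add: Dop_def algebra_simps)
  qed
  then show ?case using Suc by (auto simp: fun_eq_iff)
qed


locale bil =
  fixes su :: "complex \<Rightarrow> 'u::ab_group_add \<Rightarrow> 'u" and sv :: "complex \<Rightarrow> 'v::ab_group_add \<Rightarrow> 'v"
    and sw :: "complex \<Rightarrow> 'w::ab_group_add \<Rightarrow> 'w" and t :: "'u \<Rightarrow> 'v \<Rightarrow> 'w"
  assumes bl: "bilin su sv sw t"
begin

lemma lin1: "Vector_Spaces.linear su sw (\<lambda>a. t a b)" using bl bilin_def by blast
lemma lin2: "Vector_Spaces.linear sv sw (t a)" using bl bilin_def by blast

lemma t0[simp]: "t 0 y = 0" "t x 0 = 0"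
  using lin_zero[OF lin1] lin_zero[OF lin2] by auto
lemma tadd: "t (x1 + x2) y = t x1 y + t x2 y" "t x (y1 + y2) = t x y1 + t x y2"
  using lin_add[OF lin1] lin_add[OF lin2] by auto
lemma tdiff: "t (x1 - x2) y = t x1 y - t x2 y" "t x (y1 - y2) = t x y1 - t x y2"
  using lin_diff[OF lin1] lin_diff[OF lin2] by auto
lemma tscale: "t (su c x) y = sw c (t x y)" "t x (sv c y) = sw c (t x y)"
  using lin_scale[OF lin1] lin_scale[OF lin2] by auto
lemma tsum: "t (sum f A) y = (\<Sum>a\<in>A. t (f a) y)" "t x (sum g A) = (\<Sum>a\<in>A. t x (g a))"
  using lin_sum[OF lin1] lin_sum[OF lin2] by auto
lemma tSum_any1: "finite {x. f x \<noteq> 0} \<Longrightarrow> t (Sum_any f) y = Sum_any (\<lambda>x. t (f x) y)"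
  using lin_Sum_any[OF lin1] by blast
lemma tSum_any2: "finite {x. f x \<noteq> 0} \<Longrightarrow> t x (Sum_any f) = Sum_any (\<lambda>y. t x (f y))"
  using lin_Sum_any[OF lin2] by blast

definition conv :: "(int \<Rightarrow> int \<Rightarrow> 'u) \<Rightarrow> (int \<Rightarrow> int \<Rightarrow> 'v) \<Rightarrow> int \<Rightarrow> int \<Rightarrow> 'w" where
  "conv F G a b = Sum_any (\<lambda>(c, d). t (F c d) (G (a - c) (b - d)))"

end

definition FIN :: "(int \<Rightarrow> int \<Rightarrow> 'u::zero) \<Rightarrow> (int \<Rightarrow> int \<Rightarrow> 'v::zero) \<Rightarrow> bool" where
  "FIN F G \<longleftrightarrow> (\<forall>a b. finite {(c, d). F c d \<noteq> 0 \<and> G (a - c) (b - d) \<noteq> 0})"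

lemma FIN_DopL:
  assumes "FIN F G" shows "FIN (Dop F) G"
  unfolding FIN_def
proof (intro allI)
  fix a b
  let ?A = "{(c, d). F c d \<noteq> 0 \<and> G (a - 1 - c) (b - d) \<noteq> 0}"
  let ?B = "{(c, d). F c d \<noteq> 0 \<and> G (a - c) (b - 1 - d) \<noteq> 0}"
  have "{(c, d). Dop F c d \<noteq> 0 \<and> G (a - c) (b - d) \<noteq> 0} \<subseteq>
      (\<lambda>(c, d). (c + 1, d)) ` ?A \<union> (\<lambda>(c, d). (c, d + 1)) ` ?B"
  proof
    fix p assume p: "p \<in> {(c, d). Dop F c d \<noteq> 0 \<and> G (a - c) (b - d) \<noteq> 0}"
    obtain c d where pcd: "p = (c, d)" by (cases p)
    have "F (c - 1) d \<noteq> 0 \<or> F c (d - 1) \<noteq> 0" and g: "G (a - c) (b - d) \<noteq> 0"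
      using p pcd by (auto simp: Dop_def)
    then show "p \<in> (\<lambda>(c, d). (c + 1, d)) ` ?A \<union> (\<lambda>(c, d). (c, d + 1)) ` ?B"
    proof (elim disjE)
      assume "F (c - 1) d \<noteq> 0"
      then have "(c - 1, d) \<in> ?A" using g by (simp add: algebra_simps)
      then show ?thesis using pcd by (auto intro!: image_eqI[of _ _ "(c - 1, d)"])
    next
      assume "F c (d - 1) \<noteq> 0"
      then have "(c, d - 1) \<in> ?B" using g by (simp add: algebra_simps)
      then show ?thesis using pcd by (auto intro!: image_eqI[of _ _ "(c, d - 1)"])
    qed
  qed
  moreover have "finite ?A" "finite ?B" using assms unfolding FIN_def by auto
  ultimately show "finite {(c, d). Dop F c d \<noteq> 0 \<and> G (a - c) (b - d) \<noteq> 0}"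
    by (meson finite_UnI finite_imageI finite_subset)
qed

lemma FIN_DopR:
  assumes "FIN F G" shows "FIN F (Dop G)"
  unfolding FIN_def
proof (intro allI)
  fix a b
  let ?A = "{(c, d). F c d \<noteq> 0 \<and> G (a - 1 - c) (b - d) \<noteq> 0}"
  let ?B = "{(c, d). F c d \<noteq> 0 \<and> G (a - c) (b - 1 - d) \<noteq> 0}"
  have "{(c, d). F c d \<noteq> 0 \<and> Dop G (a - c) (b - d) \<noteq> 0} \<subseteq> ?A \<union> ?B"
    by (auto simp: Dop_def algebra_simps)
  moreover have "finite ?A" "finite ?B" using assms unfolding FIN_def by auto
  ultimately show "finite {(c, d). F c d \<noteq> 0 \<and> Dop G (a - c) (b - d) \<noteq> 0}"
    by (meson finite_UnI finite_subset)
qed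

lemma FIN_DopL_pow: "FIN F G \<Longrightarrow> FIN ((Dop ^^ l) F) G"
  by (induction l) (auto intro: FIN_DopL)
lemma FIN_DopR_pow: "FIN F G \<Longrightarrow> FIN F ((Dop ^^ l) G)"
  by (induction l) (auto intro: FIN_DopR)

context bil
begin

lemma fin_supp_conv:
  assumes "FIN F G"
  shows "finite {p. (case p of (c, d) \<Rightarrow> t (F c d) (G (a - c) (b - d))) \<noteq> 0}"
proof -
  have "{p. (case p of (c, d) \<Rightarrow> t (F c d) (G (a - c) (b - d))) \<noteq> 0} \<subseteq> {(c, d). F c d \<noteq> 0 \<and> G (a - c) (b - d) \<noteq> 0}"
    by auto
  then show ?thesis using assms FIN_def finite_subset by blast
qed

lemma conv_DopR:
  assumes "FIN F G" shows "conv F (Dop G) = Dop (conv F G)"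
proof (intro ext)
  fix a b
  have "conv F (Dop G) a b = Sum_any (\<lambda>(c, d). t (F c d) (G (a - 1 - c) (b - d)) + t (F c d) (G (a - c) (b - 1 - d)))"
    unfolding conv_def Dop_def by (intro Sum_any.cong) (auto simp: tadd algebra_simps)
  also have "\<dots> = Sum_any (\<lambda>(c, d). t (F c d) (G (a - 1 - c) (b - d))) + Sum_any (\<lambda>(c, d). t (F c d) (G (a - c) (b - 1 - d)))"
    using Sum_any.distrib[OF fin_supp_conv[OF assms, of "a - 1" b] fin_supp_conv[OF assms, of a "b - 1"]]
    by (simp add: case_prod_beta algebra_simps)
  also have "\<dots> = Dop (conv F G) a b"
    unfolding conv_def Dop_def by (simp add: algebra_simps)
  finally show "conv F (Dop G) a b = Dop (conv F G) a b" .
qed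

lemma conv_DopL:
  assumes "FIN F G" shows "conv (Dop F) G = Dop (conv F G)"
proof (intro ext)
  fix a b
  have "conv (Dop F) G a b = Sum_any (\<lambda>(c, d). t (F (c - 1) d) (G (a - c) (b - d)) + t (F c (d - 1)) (G (a - c) (b - d)))"
    unfolding conv_def Dop_def by (intro Sum_any.cong) (auto simp: tadd)
  also have "\<dots> = Sum_any (\<lambda>(c, d). t (F (c - 1) d) (G (a - c) (b - d))) + Sum_any (\<lambda>(c, d). t (F c (d - 1)) (G (a - c) (b - d)))"
  proof -
    have f1: "finite {p. (case p of (c, d) \<Rightarrow> t (F (c - 1) d) (G (a - c) (b - d))) \<noteq> 0}"
    proof (rule finite_subset)
      show "{p. (case p of (c, d) \<Rightarrow> t (F (c - 1) d) (G (a - c) (b - d))) \<noteq> 0} \<subseteq>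
        (\<lambda>(c, d). (c + 1, d)) ` {(c, d). F c d \<noteq> 0 \<and> G (a - 1 - c) (b - d) \<noteq> 0}"
      proof
        fix p assume p: "p \<in> {p. (case p of (c, d) \<Rightarrow> t (F (c - 1) d) (G (a - c) (b - d))) \<noteq> 0}"
        obtain c d where pcd: "p = (c, d)" by (cases p)
        have "(c - 1, d) \<in> {(c, d). F c d \<noteq> 0 \<and> G (a - 1 - c) (b - d) \<noteq> 0}"
          using p pcd by (auto simp: algebra_simps)
        then show "p \<in> (\<lambda>(c, d). (c + 1, d)) ` {(c, d). F c d \<noteq> 0 \<and> G (a - 1 - c) (b - d) \<noteq> 0}"
          using pcd by (auto intro!: image_eqI[of _ _ "(c - 1, d)"])
      qed
      show "finite ((\<lambda>(c, d). (c + 1, d)) ` {(c, d). F c d \<noteq> 0 \<and> G (a - 1 - c) (b - d) \<noteq> 0})"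
        using assms unfolding FIN_def by blast
    qed
    have f2: "finite {p. (case p of (c, d) \<Rightarrow> t (F c (d - 1)) (G (a - c) (b - d))) \<noteq> 0}"
    proof (rule finite_subset)
      show "{p. (case p of (c, d) \<Rightarrow> t (F c (d - 1)) (G (a - c) (b - d))) \<noteq> 0} \<subseteq>
        (\<lambda>(c, d). (c, d + 1)) ` {(c, d). F c d \<noteq> 0 \<and> G (a - c) (b - 1 - d) \<noteq> 0}"
      proof
        fix p assume p: "p \<in> {p. (case p of (c, d) \<Rightarrow> t (F c (d - 1)) (G (a - c) (b - d))) \<noteq> 0}"
        obtain c d where pcd: "p = (c, d)" by (cases p)
        have "(c, d - 1) \<in> {(c, d). F c d \<noteq> 0 \<and> G (a - c) (b - 1 - d) \<noteq> 0}"
          using p pcd by (auto simp: algebra_simps)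
        then show "p \<in> (\<lambda>(c, d). (c, d + 1)) ` {(c, d). F c d \<noteq> 0 \<and> G (a - c) (b - 1 - d) \<noteq> 0}"
          using pcd by (auto intro!: image_eqI[of _ _ "(c, d - 1)"])
      qed
      show "finite ((\<lambda>(c, d). (c, d + 1)) ` {(c, d). F c d \<noteq> 0 \<and> G (a - c) (b - 1 - d) \<noteq> 0})"
        using assms unfolding FIN_def by blast
    qed
    show ?thesis using Sum_any.distrib[OF f1 f2] by (simp add: case_prod_beta)
  qed
  also have "Sum_any (\<lambda>(c, d). t (F (c - 1) d) (G (a - c) (b - d))) = conv F G (a - 1) b"
    unfolding conv_def
    by (rule Sum_any.reindex_cong[of "\<lambda>(c, d). (c + 1, d)"])
       (auto simp: bij_def inj_def image_def fun_eq_iff algebra_simps intro!: exI[of _ "_ - 1"])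
  also have "Sum_any (\<lambda>(c, d). t (F c (d - 1)) (G (a - c) (b - d))) = conv F G a (b - 1)"
    unfolding conv_def
    by (rule Sum_any.reindex_cong[of "\<lambda>(c, d). (c, d + 1)"])
       (auto simp: bij_def inj_def image_def fun_eq_iff algebra_simps intro!: exI[of _ "_ - 1"])
  finally show "conv (Dop F) G a b = Dop (conv F G) a b" by (simp add: Dop_def[abs_def])
qed

lemma conv_DopL_pow: "FIN F G \<Longrightarrow> (Dop ^^ l) (conv F G) = conv ((Dop ^^ l) F) G"
  by (induction l) (auto simp: conv_DopL FIN_DopL_pow)

lemma conv_DopR_pow: "FIN F G \<Longrightarrow> (Dop ^^ l) (conv F G) = conv F ((Dop ^^ l) G)"
  by (induction l) (auto simp: conv_DopR FIN_DopR_pow)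

lemma conv_Dop_pow:
  assumes "FIN F G"
  shows "(Dop ^^ (l1 + l2)) (conv F G) = conv ((Dop ^^ l1) F) ((Dop ^^ l2) G)"
proof -
  have "(Dop ^^ (l1 + l2)) (conv F G) = (Dop ^^ l2) ((Dop ^^ l1) (conv F G))"
    by (simp only: add.commute[of l1 l2] funpow_add comp_def)
  also have "\<dots> = (Dop ^^ l2) (conv ((Dop ^^ l1) F) G)" using conv_DopL_pow[OF assms] by simp
  also have "\<dots> = conv ((Dop ^^ l1) F) ((Dop ^^ l2) G)"
    by (rule conv_DopR_pow[OF FIN_DopL_pow[OF assms]])
  finally show ?thesis .
qed

end


locale smash =
  fixes G :: "('g, 'b) monoid_scheme"
    and sU :: "complex \<Rightarrow> 'u::ab_group_add \<Rightarrow> 'u" and YU :: "'u \<Rightarrow> 'u \<Rightarrow> int \<Rightarrow> 'u" and vacU :: 'u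
    and act :: "'g \<Rightarrow> 'u \<Rightarrow> 'u"
    and sV :: "complex \<Rightarrow> 'v::ab_group_add \<Rightarrow> 'v" and YV :: "'v \<Rightarrow> 'v \<Rightarrow> int \<Rightarrow> 'v" and vacV :: 'v
    and Vg :: "'g \<Rightarrow> 'v set"
    and sW :: "complex \<Rightarrow> 'w::ab_group_add \<Rightarrow> 'w" and t :: "'u \<Rightarrow> 'v \<Rightarrow> 'w"
    and YW :: "'w \<Rightarrow> 'w \<Rightarrow> int \<Rightarrow> 'w"
  assumes grp: "group G"
    and nvaU: "nva sU YU vacU"
    and gact: "nva_group_action G sU YU vacU act"
    and grV: "nva_G_graded G sV YV vacV Vg"
    and irrU: "nva_irreducible sU YU vacU"
    and irrV: "nva_irreducible sV YV vacV"
    and cdU: "countable_dim sU"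
    and tp: "is_tensor_product sU sV sW t"
    and sm: "is_smash_Y G act YU YV Vg sW t YW"
begin

lemma nvaV: "nva sV YV vacV" using grV by (simp add: nva_G_graded_def)

lemma vsU: "vector_space sU" using nvaU by (simp add: nva_def)
lemma vsV: "vector_space sV" using nvaV by (simp add: nva_def)
lemma vsW: "vector_space sW" using tp by (simp add: is_tensor_product_def)

sublocale U: vector_space sU by (rule vsU)
sublocale V: vector_space sV by (rule vsV)
sublocale W: vector_space sW by (rule vsW)
sublocale T: bil sU sV sW t using tp by (simp add: is_tensor_product_def bil_def)

lemma YU1: "Vector_Spaces.linear sU sU (\<lambda>u. YU u w n)"
  using nvaU by (simp add: nva_def bilin_def)
lemma YU2: "Vector_Spaces.linear sU sU (\<lambda>w. YU u w n)"
  using nvaU by (simp add: nva_def bilin_def)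
lemma YV1: "Vector_Spaces.linear sV sV (\<lambda>u. YV u w n)"
  using nvaV by (simp add: nva_def bilin_def)
lemma YV2: "Vector_Spaces.linear sV sV (\<lambda>w. YV u w n)"
  using nvaV by (simp add: nva_def bilin_def)
lemma YW1: "Vector_Spaces.linear sW sW (\<lambda>u. YW u w n)"
  using sm by (simp add: is_smash_Y_def bilin_def)
lemma YW2: "Vector_Spaces.linear sW sW (\<lambda>w. YW u w n)"
  using sm by (simp add: is_smash_Y_def bilin_def)

lemma truncU: "\<exists>N. \<forall>n\<ge>N. YU u w n = 0" using nvaU by (simp add: nva_def truncated_def)
lemma truncV: "\<exists>N. \<forall>n\<ge>N. YV u w n = 0" using nvaV by (simp add: nva_def truncated_def)

lemma vacUl: "YU vacU w n = (if n = -1 then w else 0)" using nvaU by (simp add: nva_def)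
lemma vacUr: "n \<ge> 0 \<Longrightarrow> YU u vacU n = 0" using nvaU by (simp add: nva_def)
lemma vacUr1: "YU u vacU (-1) = u" using nvaU by (simp add: nva_def)
lemma vacVl: "YV vacV w n = (if n = -1 then w else 0)" using nvaV by (simp add: nva_def)
lemma vacVr: "n \<ge> 0 \<Longrightarrow> YV u vacV n = 0" using nvaV by (simp add: nva_def)
lemma vacVr1: "YV u vacV (-1) = u" using nvaV by (simp add: nva_def)

lemma waU: "weak_assoc sU YU" using nvaU by (simp add: nva_def)
lemma waV: "weak_assoc sV YV" using nvaV by (simp add: nva_def)

lemma one_carrier: "\<one>\<^bsub>G\<^esub> \<in> carrier G" using grp by (simp add: group.is_monoid monoid.one_closed)
lemma mult_carrier: "g \<in> carrier G \<Longrightarrow> h \<in> carrier G \<Longrightarrow> g \<otimes>\<^bsub>G\<^esub> h \<in> carrier G"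
  using grp by (simp add: group.is_monoid monoid.m_closed)

lemma act_aut: "g \<in> carrier G \<Longrightarrow> nva_aut sU YU vacU (act g)"
  using gact by (simp add: nva_group_action_def)
lemma act_lin: "g \<in> carrier G \<Longrightarrow> Vector_Spaces.linear sU sU (act g)"
  using act_aut by (simp add: nva_aut_def)
lemma act_vac: "g \<in> carrier G \<Longrightarrow> act g vacU = vacU"
  using act_aut by (simp add: nva_aut_def)
lemma act_Y: "g \<in> carrier G \<Longrightarrow> act g (YU u v n) = YU (act g u) (act g v) n"
  using act_aut by (simp add: nva_aut_def)
lemma act_one: "act \<one>\<^bsub>G\<^esub> = id" using gact by (simp add: nva_group_action_def)
lemma act_mult: "g \<in> carrier G \<Longrightarrow> h \<in> carrier G \<Longrightarrow> act (g \<otimes>\<^bsub>G\<^esub> h) x = act g (act h x)"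
  using gact nva_group_action_def by (metis comp_apply)

lemma Vg_sub: "g \<in> carrier G \<Longrightarrow> V.subspace (Vg g)"
  using grV by (simp add: nva_G_graded_def graded_direct_sum_def)
lemma vacV_hom: "vacV \<in> Vg \<one>\<^bsub>G\<^esub>" using grV by (simp add: nva_G_graded_def)
lemma Y_hom: "g \<in> carrier G \<Longrightarrow> h \<in> carrier G \<Longrightarrow> u \<in> Vg g \<Longrightarrow> v \<in> Vg h \<Longrightarrow> YV u v n \<in> Vg (g \<otimes>\<^bsub>G\<^esub> h)"
  using grV by (simp add: nva_G_graded_def)

lemma decomp: "\<exists>F c. finite F \<and> F \<subseteq> carrier G \<and> (\<forall>g\<in>F. c g \<in> Vg g) \<and> v = (\<Sum>g\<in>F. c g)"
proof -
  have gd: "graded_direct_sum G sV Vg" using grV by (simp add: nva_G_graded_def)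
  have "\<exists>c::'g \<Rightarrow> 'v. (\<forall>g. c g \<in> (if g \<in> carrier G then Vg g else {0})) \<and>
                     finite {g. c g \<noteq> 0} \<and> v = sum c {g. c g \<noteq> 0}"
  proof -
    have "\<forall>v. \<exists>!c::'g \<Rightarrow> 'v. (\<forall>g. c g \<in> (if g \<in> carrier G then Vg g else {0})) \<and>
                     finite {g. c g \<noteq> 0} \<and> v = sum c {g. c g \<noteq> 0}"
      using gd unfolding graded_direct_sum_def by (rule conjunct2)
    then have "\<exists>!c::'g \<Rightarrow> 'v. (\<forall>g. c g \<in> (if g \<in> carrier G then Vg g else {0})) \<and>
                     finite {g. c g \<noteq> 0} \<and> v = sum c {g. c g \<noteq> 0}" by (rule spec)
    then show ?thesis by (rule ex1_implies_ex)
  qed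
  then obtain c :: "'g \<Rightarrow> 'v" where c: "\<forall>g. c g \<in> (if g \<in> carrier G then Vg g else {0})"
      "finite {g. c g \<noteq> 0}" "v = sum c {g. c g \<noteq> 0}"
    by (elim exE conjE) blast
  have "{g. c g \<noteq> 0} \<subseteq> carrier G"
  proof
    fix g assume "g \<in> {g. c g \<noteq> 0}"
    then show "g \<in> carrier G" using c(1)[rule_format, of g] by (cases "g \<in> carrier G") auto
  qed
  moreover have "\<forall>g\<in>{g. c g \<noteq> 0}. c g \<in> Vg g"
  proof
    fix g assume g: "g \<in> {g. c g \<noteq> 0}"
    then have "g \<in> carrier G" using calculation by blast
    then show "c g \<in> Vg g" using c(1)[rule_format, of g] by simp
  qed
  ultimately show ?thesis using c by (intro exI[of _ "{g. c g \<noteq> 0}"] exI[of _ c]) auto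
qed

definition Hom :: "'v set" where "Hom = {v. \<exists>g\<in>carrier G. v \<in> Vg g}"

lemma t_span: "W.span {t u v | u v. True} = UNIV"
  using tp by (simp add: is_tensor_product_def)

lemma t_span_hom: "W.span {t u v | u v. v \<in> Hom} = UNIV"
proof -
  have "t u v \<in> W.span {t u v | u v. v \<in> Hom}" for u v
  proof -
    obtain F c where F: "finite F" "F \<subseteq> carrier G" "\<forall>g\<in>F. c g \<in> Vg g" "v = (\<Sum>g\<in>F. c g)"
      using decomp[of v] by (elim exE conjE) (rule that)
    have "t u v = (\<Sum>g\<in>F. t u (c g))" using F(4) T.tsum(2) by simp
    also have "\<dots> \<in> W.span {t u v | u v. v \<in> Hom}"
    proof (intro W.span_sum W.span_base)
      fix g assume g: "g \<in> F"
      then have "c g \<in> Hom" using F unfolding Hom_def by blast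
      then show "t u (c g) \<in> {t u v | u v. v \<in> Hom}" by blast
    qed
    finally show ?thesis .
  qed
  then have "{t u v | u v. True} \<subseteq> W.span {t u v | u v. v \<in> Hom}" by auto
  then have "W.span {t u v | u v. True} \<subseteq> W.span {t u v | u v. v \<in> Hom}"
    by (rule W.span_minimal) simp
  then show ?thesis using t_span by auto
qed

lemma W_induct:
  assumes "\<And>u v. v \<in> Hom \<Longrightarrow> P (t u v)" and "W.subspace {x. P x}"
  shows "P x"
proof -
  have "x \<in> W.span {t u v | u v. v \<in> Hom}" using t_span_hom by simp
  then show ?thesis
    by (rule W.span_induct[where P=P]) (use assms in auto)
qed

lemma YW_t: "g \<in> carrier G \<Longrightarrow> v \<in> Vg g \<Longrightarrow>
   YW (t u v) (t u' v') n = Sum_any (\<lambda>i. t (YU u (act g u') i) (YV v v' (n - 1 - i)))"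
  using sm by (simp add: is_smash_Y_def)

lemma YW_vacU:
  assumes "g \<in> carrier G" "v \<in> Vg g"
  shows "YW (t vacU v) (t u' v') n = t (act g u') (YV v v' n)"
proof -
  have "YW (t vacU v) (t u' v') n = Sum_any (\<lambda>i. if i = -1 then t (act g u') (YV v v' (n - 1 - i)) else 0)"
    unfolding YW_t[OF assms] by (intro Sum_any.cong) (simp add: vacUl)
  then show ?thesis by simp
qed

lemma YW_vacV: "YW (t u vacV) (t u' v') n = t (YU u u' n) v'"
proof -
  have "YW (t u vacV) (t u' v') n = Sum_any (\<lambda>i. if i = n then t (YU u u' i) v' else 0)"
    unfolding YW_t[OF one_carrier vacV_hom] by (intro Sum_any.cong) (auto simp: vacVl act_one)
  then show ?thesis by simp
qed

lemma U_trivial: "vacU = 0 \<Longrightarrow> (u::'u) = 0"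
  using vacUr1[of u] lin_zero[OF YU2[of u "-1"]] by simp

end


context smash
begin

lemma vs_cx: "vector_space ((*) :: complex \<Rightarrow> complex \<Rightarrow> complex)" by (rule vs_complex)

lemma lin_mult_const:
  assumes "Vector_Spaces.linear s ((*)::complex\<Rightarrow>complex\<Rightarrow>complex) \<phi>"
  shows "Vector_Spaces.linear s (*) (\<lambda>x. \<phi> x * k)"
  using assms unfolding Vector_Spaces.linear_iff by (auto simp: algebra_simps)

lemma lin_const_mult:
  assumes "Vector_Spaces.linear s ((*)::complex\<Rightarrow>complex\<Rightarrow>complex) \<phi>"
  shows "Vector_Spaces.linear s (*) (\<lambda>x. k * \<phi> x)"
  using assms unfolding Vector_Spaces.linear_iff by (auto simp: algebra_simps)

lemma irrU_rule:
  assumes "U.subspace S" "\<forall>u w n. w \<in> S \<longrightarrow> YU u w n \<in> S" shows "S = {0} \<or> S = UNIV"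
proof -
  have "\<forall>S. U.subspace S \<and> (\<forall>u w n. w \<in> S \<longrightarrow> YU u w n \<in> S) \<longrightarrow> S = {0} \<or> S = UNIV"
    using irrU unfolding nva_irreducible_def by (rule conjunct2)
  then show ?thesis using assms by blast
qed

lemma irrV_rule:
  assumes "V.subspace S" "\<forall>u w n. w \<in> S \<longrightarrow> YV u w n \<in> S" shows "S = {0} \<or> S = UNIV"
proof -
  have "\<forall>S. V.subspace S \<and> (\<forall>u w n. w \<in> S \<longrightarrow> YV u w n \<in> S) \<longrightarrow> S = {0} \<or> S = UNIV"
    using irrV unfolding nva_irreducible_def by (rule conjunct2)
  then show ?thesis using assms by blast
qed

lemma TI:
  assumes BV: "V.independent BV" and F: "finite F" "F \<subseteq> BV"
    and z: "(\<Sum>b\<in>F. t (d b) b) = 0" and b0: "b0 \<in> F"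
  shows "d b0 = 0"
proof (rule ccontr)
  assume nz: "d b0 \<noteq> 0"
  interpret UC: vector_space_pair sU "(*) :: complex \<Rightarrow> complex \<Rightarrow> complex"
    by (intro vector_space_pair.intro vsU vs_cx)
  interpret VC: vector_space_pair sV "(*) :: complex \<Rightarrow> complex \<Rightarrow> complex"
    by (intro vector_space_pair.intro vsV vs_cx)
  have "U.independent {d b0}" using nz by simp
  then obtain \<phi> where \<phi>: "Vector_Spaces.linear sU (*) \<phi>" "\<phi> (d b0) = 1"
    using UC.linear_independent_extend[of "{d b0}" "\<lambda>_. 1"] by auto
  obtain \<psi> where \<psi>: "Vector_Spaces.linear sV (*) \<psi>" "\<And>b. b \<in> BV \<Longrightarrow> \<psi> b = (if b = b0 then 1 else 0)"
    using VC.linear_independent_extend[OF BV, of "\<lambda>b. if b = b0 then 1 else 0"] by auto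
  have "bilin sU sV (*) (\<lambda>u v. \<phi> u * \<psi> v)"
    unfolding bilin_def using lin_mult_const[OF \<phi>(1)] lin_const_mult[OF \<psi>(1)] by auto
  then obtain \<Phi> where \<Phi>: "Vector_Spaces.linear sW (*) \<Phi>" "\<And>u v. \<phi> u * \<psi> v = \<Phi> (t u v)"
    using tp unfolding is_tensor_product_def by blast
  have "\<Phi> (\<Sum>b\<in>F. t (d b) b) = (\<Sum>b\<in>F. \<phi> (d b) * \<psi> b)"
    by (simp add: lin_sum[OF \<Phi>(1)] \<Phi>(2))
  also have "\<dots> = \<phi> (d b0) * \<psi> b0 + (\<Sum>b\<in>F - {b0}. \<phi> (d b) * \<psi> b)"
    using F b0 by (simp add: sum.remove)
  also have "(\<Sum>b\<in>F - {b0}. \<phi> (d b) * \<psi> b) = 0"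
    using F by (intro sum.neutral) (auto simp: \<psi>(2))
  finally have "\<Phi> (\<Sum>b\<in>F. t (d b) b) = 1" using \<phi>(2) \<psi>(2) F b0 by auto
  moreover have "\<Phi> 0 = 0" by (rule lin_zero[OF \<Phi>(1)])
  ultimately show False using z by simp
qed

lemma REP:
  assumes BV: "V.span BV = UNIV"
  shows "\<exists>F d. finite F \<and> F \<subseteq> BV \<and> w = (\<Sum>b\<in>F. t (d b) b)"
proof -
  let ?P = "\<lambda>w. \<exists>F d. finite F \<and> F \<subseteq> BV \<and> w = (\<Sum>b\<in>F. t (d b) b)"
  have "w \<in> W.span {t u v | u v. True}" using t_span by simp
  then show ?thesis
  proof (rule W.span_induct[where P="?P"])
    show "W.subspace {x. ?P x}"
      unfolding W.subspace_def
    proof (intro conjI ballI allI)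
      show "0 \<in> {x. ?P x}" by (auto intro!: exI[of _ "{}"])
    next
      fix x y assume "x \<in> {x. ?P x}" "y \<in> {x. ?P x}"
      then obtain F1 d1 F2 d2 where 1: "finite F1" "F1 \<subseteq> BV" "x = (\<Sum>b\<in>F1. t (d1 b) b)"
        and 2: "finite F2" "F2 \<subseteq> BV" "y = (\<Sum>b\<in>F2. t (d2 b) b)" by auto
      define d where "d b = (if b \<in> F1 then d1 b else 0) + (if b \<in> F2 then d2 b else 0)" for b
      have "(\<Sum>b\<in>F1 \<union> F2. t (d b) b) = (\<Sum>b\<in>F1 \<union> F2. t (if b \<in> F1 then d1 b else 0) b) + (\<Sum>b\<in>F1 \<union> F2. t (if b \<in> F2 then d2 b else 0) b)"
        unfolding d_def by (simp add: T.tadd sum.distrib)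
      also have "(\<Sum>b\<in>F1 \<union> F2. t (if b \<in> F1 then d1 b else 0) b) = (\<Sum>b\<in>F1. t (d1 b) b)"
        using 1 2 by (intro sum.mono_neutral_cong_right) auto
      also have "(\<Sum>b\<in>F1 \<union> F2. t (if b \<in> F2 then d2 b else 0) b) = (\<Sum>b\<in>F2. t (d2 b) b)"
        using 1 2 by (intro sum.mono_neutral_cong_right) auto
      finally show "x + y \<in> {x. ?P x}" using 1 2
        by (intro CollectI exI[of _ "F1 \<union> F2"] exI[of _ d]) auto
    next
      fix c x assume "x \<in> {x. ?P x}"
      then obtain F1 d1 where 1: "finite F1" "F1 \<subseteq> BV" "x = (\<Sum>b\<in>F1. t (d1 b) b)" by auto
      have "sW c x = (\<Sum>b\<in>F1. t (sU c (d1 b)) b)" using 1 by (simp add: W.scale_sum_right T.tscale)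
      then show "sW c x \<in> {x. ?P x}" using 1 by (intro CollectI exI[of _ F1] exI[of _ "\<lambda>b. sU c (d1 b)"]) auto
    qed
  next
    fix x assume "x \<in> {t u v | u v. True}"
    then obtain u v where x: "x = t u v" by auto
    have "v \<in> V.span BV" using BV by simp
    then have "\<exists>F r. v = (\<Sum>b\<in>F. sV (r b) b) \<and> finite F \<and> F \<subseteq> BV"
      unfolding V.span_explicit by (simp only: mem_Collect_eq)
    then obtain F r where F: "finite F" "F \<subseteq> BV" "v = (\<Sum>b\<in>F. sV (r b) b)"
      by (elim exE conjE) (rule that)
    have "x = (\<Sum>b\<in>F. t (sU (r b) u) b)" using x F by (simp add: T.tsum T.tscale)
    then show "?P x" using F by (intro exI[of _ F] exI[of _ "\<lambda>b. sU (r b) u"]) simp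
  qed
qed

lemma irrW:
  assumes S: "W.subspace S" and cl: "\<forall>a w n. w \<in> S \<longrightarrow> YW a w n \<in> S"
  shows "S = {0} \<or> S = UNIV"
proof (rule ccontr)
  assume nS: "\<not> (S = {0} \<or> S = UNIV)"
  obtain BV where BV: "V.independent BV" "V.span BV = UNIV"
    using V.maximal_independent_subset[of UNIV] by (metis top.extremum_uniqueI)
  have "\<exists>s\<in>S. s \<noteq> 0" using nS W.subspace_0[OF S] by blast
  then obtain s where s: "s \<in> S" "s \<noteq> 0" by blast
  define K where "K = {k. \<exists>F d. finite F \<and> F \<subseteq> BV \<and> card F = k \<and> (\<Sum>b\<in>F. t (d b) b) \<in> S \<and> (\<Sum>b\<in>F. t (d b) b) \<noteq> 0}"
  obtain F0 d0 where "finite F0" "F0 \<subseteq> BV" "s = (\<Sum>b\<in>F0. t (d0 b) b)" using REP[OF BV(2)] by blast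
  then have "card F0 \<in> K" unfolding K_def using s by blast
  define k0 where "k0 = (LEAST k. k \<in> K)"
  have "k0 \<in> K" unfolding k0_def using \<open>card F0 \<in> K\<close> by (rule LeastI)
  then obtain F d where F: "finite F" "F \<subseteq> BV" "card F = k0" "(\<Sum>b\<in>F. t (d b) b) \<in> S" "(\<Sum>b\<in>F. t (d b) b) \<noteq> 0"
    unfolding K_def by blast
  have MIN: "(\<Sum>b\<in>F'. t (d' b) b) = 0" if "finite F'" "F' \<subseteq> BV" "card F' < k0" "(\<Sum>b\<in>F'. t (d' b) b) \<in> S" for F' d'
  proof (rule ccontr)
    assume "(\<Sum>b\<in>F'. t (d' b) b) \<noteq> 0"
    then have "card F' \<in> K" unfolding K_def using that by blast
    then have "k0 \<le> card F'" unfolding k0_def by (rule Least_le)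
    then show False using that by simp
  qed
  obtain b0 where b0: "b0 \<in> F" "d b0 \<noteq> 0"
  proof -
    have "\<not> (\<forall>b\<in>F. d b = 0)"
    proof
      assume "\<forall>b\<in>F. d b = 0"
      then have "(\<Sum>b\<in>F. t (d b) b) = 0" by (intro sum.neutral) simp
      then show False using F(5) by simp
    qed
    then show ?thesis using that by blast
  qed
  have clU: "(\<Sum>b\<in>F. t (YU u (e b) n) b) \<in> S" if "(\<Sum>b\<in>F. t (e b) b) \<in> S" for e u n
  proof -
    have "YW (t u vacV) (\<Sum>b\<in>F. t (e b) b) n = (\<Sum>b\<in>F. t (YU u (e b) n) b)"
      by (simp add: lin_sum[OF YW2] YW_vacV)
    then show ?thesis using cl that by metis
  qed
  define R where "R x e \<longleftrightarrow> e b0 = x \<and> (\<Sum>b\<in>F. t (e b) b) \<in> S" for x e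
  have UNIQ: "e b = e' b" if "R x e" "R x e'" "b \<in> F" for x e e' b
  proof -
    have "(\<Sum>b\<in>F. t (e b - e' b) b) = (\<Sum>b\<in>F. t (e b) b) - (\<Sum>b\<in>F. t (e' b) b)"
      by (simp add: T.tdiff sum_subtractf)
    also have "\<dots> \<in> S" using that R_def W.subspace_diff[OF S] by blast
    finally have inS: "(\<Sum>b\<in>F. t (e b - e' b) b) \<in> S" .
    have eq: "(\<Sum>b\<in>F. t (e b - e' b) b) = (\<Sum>b\<in>F - {b0}. t (e b - e' b) b)"
      using F(1) b0(1) that(1,2) unfolding R_def by (simp add: sum.remove)
    have ck: "card (F - {b0}) < k0" using card_Diff1_less[OF F(1) b0(1)] F(3) by simp
    have "(\<Sum>b\<in>F - {b0}. t (e b - e' b) b) = 0"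
      using MIN[of "F - {b0}" "\<lambda>b. e b - e' b"] ck F(1,2) inS eq by auto
    then have "b \<in> F - {b0} \<Longrightarrow> e b - e' b = 0" for b
      using TI[OF BV(1), of "F - {b0}" "\<lambda>b. e b - e' b"] F by auto
    then show ?thesis using that unfolding R_def by (cases "b = b0") auto
  qed
  define M where "M = {x. \<exists>e. R x e}"
  have Msub: "U.subspace M"
    unfolding U.subspace_def M_def
  proof (intro conjI ballI allI)
    show "0 \<in> {x. \<exists>e. R x e}" unfolding R_def using W.subspace_0[OF S]
      by (intro CollectI exI[of _ "\<lambda>_. 0"]) simp
  next
    fix x y assume "x \<in> {x. \<exists>e. R x e}" "y \<in> {x. \<exists>e. R x e}"
    then obtain e e' where "R x e" "R y e'" by auto
    then have "R (x + y) (\<lambda>b. e b + e' b)" unfolding R_def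
      using W.subspace_add[OF S] by (simp add: T.tadd sum.distrib)
    then show "x + y \<in> {x. \<exists>e. R x e}" by blast
  next
    fix c x assume "x \<in> {x. \<exists>e. R x e}"
    then obtain e where "R x e" by auto
    then have "R (sU c x) (\<lambda>b. sU c (e b))" unfolding R_def
      using W.subspace_scale[OF S] by (simp add: T.tscale W.scale_sum_right[symmetric])
    then show "sU c x \<in> {x. \<exists>e. R x e}" by blast
  qed
  have RY: "R (YU u x n) (\<lambda>b. YU u (e b) n)" if "R x e" for x e u n
    using that clU unfolding R_def by auto
  have Mcl: "\<forall>u w n. w \<in> M \<longrightarrow> YU u w n \<in> M" unfolding M_def using RY by blast
  have "d b0 \<in> M" unfolding M_def R_def using F(4) by blast
  then have "M \<noteq> {0}" using b0 by auto
  then have MU: "M = UNIV" using irrU_rule[OF Msub Mcl] by blast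
  define E where "E x = (SOME e. R x e)" for x
  have RE: "R x (E x)" for x
  proof -
    have "\<exists>e. R x e" using MU M_def by auto
    then show ?thesis unfolding E_def by (rule someI_ex)
  qed
  interpret D: dix sU YU
  proof (rule dix.intro)
    show "cvs sU" unfolding cvs_def by (rule vsU)
    show "dix_axioms sU YU"
    proof (rule dix_axioms.intro)
      show "\<And>u n. Vector_Spaces.linear sU sU (\<lambda>w. YU u w n)" by (rule YU2)
      show "\<And>S. U.subspace S \<Longrightarrow> (\<forall>u w n. w \<in> S \<longrightarrow> YU u w n \<in> S) \<Longrightarrow> S = {0} \<or> S = UNIV"
        by (rule irrU_rule)
      show "\<exists>B. countable B \<and> U.independent B \<and> U.span B = UNIV"
        using cdU unfolding countable_dim_def by blast
    qed
  qed
  have endo: "D.endo (\<lambda>x. E x b)" if "b \<in> F" for b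
    unfolding D.endo_def
  proof (intro conjI allI)
    show "Vector_Spaces.linear sU sU (\<lambda>x. E x b)"
      unfolding Vector_Spaces.linear_iff
    proof (intro conjI allI vsU)
      fix x y
      have "R (x + y) (\<lambda>b. E x b + E y b)" using RE[of x] RE[of y] unfolding R_def
        using W.subspace_add[OF S] by (simp add: T.tadd sum.distrib)
      then show "E (x + y) b = E x b + E y b" using UNIQ[OF RE[of "x + y"] _ that] by simp
    next
      fix c x
      have "R (sU c x) (\<lambda>b. sU c (E x b))" using RE[of x] unfolding R_def
        using W.subspace_scale[OF S] by (simp add: T.tscale W.scale_sum_right[symmetric])
      then show "E (sU c x) b = sU c (E x b)" using UNIQ[OF RE[of "sU c x"] _ that] by simp
    qed
  next
    fix u w n
    show "E (YU u w n) b = YU u (E w b) n" using UNIQ[OF RE RY[OF RE] that] .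
  qed
  have "\<forall>b\<in>F. \<exists>c. \<forall>x. E x b = sU c x"
  proof
    fix b assume "b \<in> F"
    then show "\<exists>c. \<forall>x. E x b = sU c x" by (rule D.dixmier[OF endo])
  qed
  then have "\<exists>c. \<forall>b\<in>F. \<forall>x. E x b = sU (c b) x" by (rule bchoice)
  then obtain c where c0: "\<forall>b\<in>F. \<forall>x. E x b = sU (c b) x" by (rule exE)
  have c: "\<And>b x. b \<in> F \<Longrightarrow> E x b = sU (c b) x" using c0 by simp
  have vac0: "vacU \<noteq> 0"
  proof
    assume "vacU = 0"
    then have "d b0 = 0" by (rule U_trivial)
    then show False using b0 by simp
  qed
  have "E vacU b0 = vacU" using RE[of vacU] unfolding R_def by simp
  then have cb0: "c b0 \<noteq> 0" using c[OF b0(1), of vacU] vac0 by auto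
  define y where "y = (\<Sum>b\<in>F. sV (c b) b)"
  have "t vacU y = (\<Sum>b\<in>F. t (E vacU b) b)"
    unfolding y_def by (simp add: T.tsum T.tscale c)
  then have yS: "t vacU y \<in> S" using RE unfolding R_def by simp
  have y0: "y \<noteq> 0"
  proof
    assume "y = 0"
    then have "c b0 = 0" using V.independentD[OF BV(1) F(1) F(2), of c b0] b0 unfolding y_def by simp
    then show False using cb0 by simp
  qed
  define N where "N = {v. t vacU v \<in> S}"
  have Nsub: "V.subspace N"
    unfolding V.subspace_def N_def
  proof (intro conjI allI ballI)
    show "0 \<in> {v. t vacU v \<in> S}" using W.subspace_0[OF S] by simp
  next
    fix x y assume "x \<in> {v. t vacU v \<in> S}" "y \<in> {v. t vacU v \<in> S}"
    then show "x + y \<in> {v. t vacU v \<in> S}" using W.subspace_add[OF S] by (simp add: T.tadd)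
  next
    fix c x assume "x \<in> {v. t vacU v \<in> S}"
    then show "sV c x \<in> {v. t vacU v \<in> S}" using W.subspace_scale[OF S] by (simp add: T.tscale)
  qed
  have Nhom: "YV v' w n \<in> N" if wN: "w \<in> N" and vH: "v' \<in> Hom" for v' w n
  proof -
    obtain g where g: "g \<in> carrier G" "v' \<in> Vg g" using vH unfolding Hom_def by blast
    have "YW (t vacU v') (t vacU w) n = t vacU (YV v' w n)" using YW_vacU[OF g] act_vac[OF g(1)] by simp
    moreover have "t vacU w \<in> S" using wN unfolding N_def by simp
    ultimately have "t vacU (YV v' w n) \<in> S" using cl by metis
    then show ?thesis unfolding N_def by simp
  qed
  have Ncl: "\<forall>v' w n. w \<in> N \<longrightarrow> YV v' w n \<in> N"
  proof (intro allI impI)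
    fix v' w n assume w: "w \<in> N"
    obtain F' c' where F': "finite F'" "F' \<subseteq> carrier G" "\<forall>g\<in>F'. c' g \<in> Vg g" "v' = (\<Sum>g\<in>F'. c' g)"
      using decomp[of v'] by (elim exE conjE) (rule that)
    have "YV v' w n = (\<Sum>g\<in>F'. YV (c' g) w n)" using F'(4) by (simp add: lin_sum[OF YV1])
    also have "\<dots> \<in> N"
    proof (rule V.subspace_sum[OF Nsub])
      fix g assume "g \<in> F'"
      then have "c' g \<in> Hom" using F' unfolding Hom_def by blast
      then show "YV (c' g) w n \<in> N" using Nhom w by blast
    qed
    finally show "YV v' w n \<in> N" .
  qed
  have "N \<noteq> {0}" using yS y0 unfolding N_def by auto
  then have NU: "N = UNIV" using irrV_rule[OF Nsub Ncl] by blast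
  have tS: "t u v \<in> S" for u v
  proof -
    have "t vacU v \<in> S" using NU unfolding N_def by auto
    then have "YW (t u vacV) (t vacU v) (-1) \<in> S" using cl by blast
    then show ?thesis by (simp add: YW_vacV vacUr1)
  qed
  have "W.span {t u v | u v. True} \<subseteq> S"
    by (rule W.span_minimal) (use tS S in auto)
  then have "S = UNIV" using t_span by auto
  then show False using nS by simp
qed

end


context smash
begin

lemma sum_any_zero: "(\<And>i. f i = 0) \<Longrightarrow> Sum_any f = 0"
  by simp

lemma truncW: "\<exists>N. \<forall>n\<ge>N. YW a b n = 0"
proof -
  let ?P = "\<lambda>a. \<forall>b. \<exists>N. \<forall>n\<ge>N. YW a b n = 0"
  have gen: "\<exists>N. \<forall>n\<ge>N. YW (t u v) b n = 0" if v: "v \<in> Hom" for u v b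
  proof -
    obtain g where g: "g \<in> carrier G" "v \<in> Vg g" using v unfolding Hom_def by blast
    let ?Q = "\<lambda>b. \<exists>N. \<forall>n\<ge>N. YW (t u v) b n = 0"
    show ?thesis
    proof (rule W_induct[where P="?Q"])
      fix u' v'
      obtain N1 where N1: "\<forall>n\<ge>N1. YU u (act g u') n = 0" using truncU by blast
      obtain N2 where N2: "\<forall>n\<ge>N2. YV v v' n = 0" using truncV by blast
      have "YW (t u v) (t u' v') n = 0" if n: "n \<ge> N1 + N2" for n
      proof -
        have "t (YU u (act g u') i) (YV v v' (n - 1 - i)) = 0" for i
        proof (cases "i \<ge> N1")
          case True then show ?thesis using N1 by simp
        next
          case False then have "n - 1 - i \<ge> N2" using n by simp
          then show ?thesis using N2 by simp
        qed
        then show ?thesis unfolding YW_t[OF g] by simp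
      qed
      then show "?Q (t u' v')" by blast
    next
      show "W.subspace {x. ?Q x}"
        unfolding W.subspace_def
      proof (intro conjI allI ballI)
        show "0 \<in> {x. ?Q x}" by (simp add: lin_zero[OF YW2])
      next
        fix x y assume "x \<in> {x. ?Q x}" "y \<in> {x. ?Q x}"
        then obtain N1 N2 where "\<forall>n\<ge>N1. YW (t u v) x n = 0" "\<forall>n\<ge>N2. YW (t u v) y n = 0" by auto
        then have "\<forall>n\<ge>max N1 N2. YW (t u v) (x + y) n = 0" by (simp add: lin_add[OF YW2])
        then show "x + y \<in> {x. ?Q x}" by blast
      next
        fix c x assume "x \<in> {x. ?Q x}"
        then obtain N1 where "\<forall>n\<ge>N1. YW (t u v) x n = 0" by auto
        then have "\<forall>n\<ge>N1. YW (t u v) (sW c x) n = 0" by (simp add: lin_scale[OF YW2])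
        then show "sW c x \<in> {x. ?Q x}" by blast
      qed
    qed
  qed
  have "?P a"
  proof (rule W_induct[where P="?P"])
    fix u v assume "v \<in> Hom" then show "?P (t u v)" using gen by blast
  next
    show "W.subspace {x. ?P x}"
      unfolding W.subspace_def
    proof (intro conjI allI ballI)
      show "0 \<in> {x. ?P x}" by (simp add: lin_zero[OF YW1])
    next
      fix x y assume xy: "x \<in> {x. ?P x}" "y \<in> {x. ?P x}"
      show "x + y \<in> {x. ?P x}"
      proof (intro CollectI allI)
        fix b
        obtain N1 N2 where "\<forall>n\<ge>N1. YW x b n = 0" "\<forall>n\<ge>N2. YW y b n = 0" using xy by blast
        then have "\<forall>n\<ge>max N1 N2. YW (x + y) b n = 0" by (simp add: lin_add[OF YW1])
        then show "\<exists>N. \<forall>n\<ge>N. YW (x + y) b n = 0" by blast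
      qed
    next
      fix c x assume x: "x \<in> {x. ?P x}"
      show "sW c x \<in> {x. ?P x}"
      proof (intro CollectI allI)
        fix b
        obtain N1 where "\<forall>n\<ge>N1. YW x b n = 0" using x by blast
        then have "\<forall>n\<ge>N1. YW (sW c x) b n = 0" by (simp add: lin_scale[OF YW1])
        then show "\<exists>N. \<forall>n\<ge>N. YW (sW c x) b n = 0" by blast
      qed
    qed
  qed
  then show ?thesis by blast
qed

lemma vacWl: "YW (t vacU vacV) b n = (if n = -1 then b else 0)"
proof (rule W_induct[where P="\<lambda>b. YW (t vacU vacV) b n = (if n = -1 then b else 0)"])
  fix u v
  show "YW (t vacU vacV) (t u v) n = (if n = -1 then t u v else 0)"
    using YW_vacU[OF one_carrier vacV_hom, of u v n] by (simp add: act_one vacVl)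
next
  show "W.subspace {b. YW (t vacU vacV) b n = (if n = - 1 then b else 0)}"
    unfolding W.subspace_def by (auto simp: lin_zero[OF YW2] lin_add[OF YW2] lin_scale[OF YW2])
qed

lemma vacWr: "n \<ge> 0 \<Longrightarrow> YW a (t vacU vacV) n = 0"
proof (rule W_induct[where P="\<lambda>a. YW a (t vacU vacV) n = 0"])
  fix u v assume v: "v \<in> Hom" and n: "n \<ge> 0"
  obtain g where g: "g \<in> carrier G" "v \<in> Vg g" using v unfolding Hom_def by blast
  have "t (YU u (act g vacU) i) (YV v vacV (n - 1 - i)) = 0" for i
  proof (cases "i \<ge> 0")
    case True then show ?thesis by (simp add: act_vac[OF g(1)] vacUr)
  next
    case False then show ?thesis using n by (simp add: vacVr)
  qed
  then show "YW (t u v) (t vacU vacV) n = 0" unfolding YW_t[OF g] by simp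
next
  show "W.subspace {a. YW a (t vacU vacV) n = 0}"
    unfolding W.subspace_def by (auto simp: lin_zero[OF YW1] lin_add[OF YW1] lin_scale[OF YW1])
qed

lemma vacWr1: "YW a (t vacU vacV) (-1) = a"
proof (rule W_induct[where P="\<lambda>a. YW a (t vacU vacV) (-1) = a"])
  fix u v assume v: "v \<in> Hom"
  obtain g where g: "g \<in> carrier G" "v \<in> Vg g" using v unfolding Hom_def by blast
  have "t (YU u (act g vacU) i) (YV v vacV (- 1 - 1 - i)) = (if i = -1 then t u v else 0)" for i
  proof (cases "i \<ge> 0")
    case True then show ?thesis by (simp add: act_vac[OF g(1)] vacUr)
  next
    case False
    show ?thesis
    proof (cases "i = -1")
      case True then show ?thesis by (simp add: act_vac[OF g(1)] vacUr1 vacVr1)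
    next
      case False2: False
      then have "- 1 - 1 - i \<ge> 0" using False by simp
      then show ?thesis using False2 by (simp add: vacVr)
    qed
  qed
  then show "YW (t u v) (t vacU vacV) (-1) = t u v" unfolding YW_t[OF g] by simp
next
  show "W.subspace {a. YW a (t vacU vacV) (-1) = a}"
    unfolding W.subspace_def by (auto simp: lin_zero[OF YW1] lin_add[OF YW1] lin_scale[OF YW1])
qed

end

lemma Dop_pow_add: "(Dop ^^ l) (\<lambda>x y. F x y + G x y) = (\<lambda>x y. (Dop ^^ l) F x y + (Dop ^^ l) G x y)"
  by (induction l) (auto simp: Dop_def fun_eq_iff algebra_simps)

lemma Dop_pow_diff: "(Dop ^^ l) (\<lambda>x y. F x y - G x y) = (\<lambda>x y. (Dop ^^ l) F x y - (Dop ^^ l) G x y)"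
  by (induction l) (auto simp: Dop_def fun_eq_iff algebra_simps)

lemma Dop_pow_zero: "(Dop ^^ l) (\<lambda>x y. 0) = (\<lambda>x y. 0)"
  by (induction l) (auto simp: Dop_def fun_eq_iff)

lemma (in vector_space) Dop_pow_scale: "(Dop ^^ l) (\<lambda>x y. scale k (F x y)) = (\<lambda>x y. scale k ((Dop ^^ l) F x y))"
  by (induction l) (auto simp: Dop_def fun_eq_iff scale_right_distrib)

lemma (in vector_space) good_subspace:
  assumes add: "\<And>a1 a2. D (a1 + a2) = (\<lambda>x y. D a1 x y + D a2 x y)"
    and sc: "\<And>k a. D (scale k a) = (\<lambda>x y. scale k (D a x y))"
  shows "subspace {a. \<exists>l. (Dop ^^ l) (D a) = (\<lambda>x y. 0)}"
  unfolding subspace_def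
proof (intro conjI ballI allI)
  have "D 0 = (\<lambda>x y. 0)" using sc[of 0 0] by simp
  then show "0 \<in> {a. \<exists>l. (Dop ^^ l) (D a) = (\<lambda>x y. 0)}" by (auto intro!: exI[of _ 0])
next
  fix x y assume "x \<in> {a. \<exists>l. (Dop ^^ l) (D a) = (\<lambda>x y. 0)}" "y \<in> {a. \<exists>l. (Dop ^^ l) (D a) = (\<lambda>x y. 0)}"
  then obtain l1 l2 where l1: "(Dop ^^ l1) (D x) = (\<lambda>x y. 0)" and l2: "(Dop ^^ l2) (D y) = (\<lambda>x y. 0)" by auto
  have "(Dop ^^ (l2 + l1)) (D x) = (\<lambda>x y. 0)" using l1 by (simp add: funpow_add Dop_pow_zero)
  moreover have "(Dop ^^ (l1 + l2)) (D y) = (\<lambda>x y. 0)" using l2 by (simp add: funpow_add Dop_pow_zero)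
  ultimately have "(Dop ^^ (l1 + l2)) (D (x + y)) = (\<lambda>x y. 0)"
    by (simp add: add Dop_pow_add add.commute)
  then show "x + y \<in> {a. \<exists>l. (Dop ^^ l) (D a) = (\<lambda>x y. 0)}" by blast
next
  fix c x assume "x \<in> {a. \<exists>l. (Dop ^^ l) (D a) = (\<lambda>x y. 0)}"
  then obtain l where "(Dop ^^ l) (D x) = (\<lambda>x y. 0)" by auto
  then have "(Dop ^^ l) (D (scale c x)) = (\<lambda>x y. 0)" by (simp add: sc Dop_pow_scale)
  then show "scale c x \<in> {a. \<exists>l. (Dop ^^ l) (D a) = (\<lambda>x y. 0)}" by blast
qed


context smash
begin

definition bU :: "'u \<Rightarrow> 'u \<Rightarrow> int" where "bU u w = (SOME N. \<forall>n\<ge>N. YU u w n = 0)"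
definition bV :: "'v \<Rightarrow> 'v \<Rightarrow> int" where "bV u w = (SOME N. \<forall>n\<ge>N. YV u w n = 0)"
definition bW :: "'w \<Rightarrow> 'w \<Rightarrow> int" where "bW u w = (SOME N. \<forall>n\<ge>N. YW u w n = 0)"

lemma bU: "YU u w n \<noteq> 0 \<Longrightarrow> n < bU u w"
proof -
  have "\<forall>n\<ge>bU u w. YU u w n = 0" unfolding bU_def using truncU by (rule someI_ex)
  then show "YU u w n \<noteq> 0 \<Longrightarrow> n < bU u w" by (meson not_le)
qed
lemma bV: "YV u w n \<noteq> 0 \<Longrightarrow> n < bV u w"
proof -
  have "\<forall>n\<ge>bV u w. YV u w n = 0" unfolding bV_def using truncV by (rule someI_ex)
  then show "YV u w n \<noteq> 0 \<Longrightarrow> n < bV u w" by (meson not_le)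
qed
lemma bW: "YW u w n \<noteq> 0 \<Longrightarrow> n < bW u w"
proof -
  have "\<forall>n\<ge>bW u w. YW u w n = 0" unfolding bW_def using truncW by (rule someI_ex)
  then show "YW u w n \<noteq> 0 \<Longrightarrow> n < bW u w" by (meson not_le)
qed

definition J0 :: "'w \<Rightarrow> 'w \<Rightarrow> int \<Rightarrow> nat set" where "J0 b c y = {..<nat (bW b c + y + 1)}"

lemma J0: "j \<notin> J0 b c y \<Longrightarrow> YW b c (int j - y - 1) = 0"
  unfolding J0_def using bW[of b c "int j - y - 1"] by (cases "YW b c (int j - y - 1) = 0") auto

lemma PW_sum:
  assumes J: "finite J" "\<And>j. j \<notin> J \<Longrightarrow> YW b c (int j - y - 1) = 0"
  shows "prod_coeff sW YW a b c x y =
    (\<Sum>j\<in>J. sW ((of_int (x + int j) :: complex) gchoose j) (YW a (YW b c (int j - y - 1)) (- x - 1 - int j)))"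
  unfolding prod_coeff_def
proof (rule Sum_any.expand_superset[OF J(1)])
  show "{j. sW ((of_int (x + int j) :: complex) gchoose j) (YW a (YW b c (int j - y - 1)) (- x - 1 - int j)) \<noteq> 0} \<subseteq> J"
  proof
    fix j assume j: "j \<in> {j. sW ((of_int (x + int j) :: complex) gchoose j) (YW a (YW b c (int j - y - 1)) (- x - 1 - int j)) \<noteq> 0}"
    show "j \<in> J"
    proof (rule ccontr)
      assume "j \<notin> J"
      then have "YW b c (int j - y - 1) = 0" by (rule J(2))
      then show False using j by (simp add: lin_zero[OF YW2])
    qed
  qed
qed

definition DW :: "'w \<Rightarrow> 'w \<Rightarrow> 'w \<Rightarrow> int \<Rightarrow> int \<Rightarrow> 'w" where
  "DW a b c = (\<lambda>x y. prod_coeff sW YW a b c x y - iter_coeff YW a b c x y)"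

definition good :: "'w \<Rightarrow> 'w \<Rightarrow> 'w \<Rightarrow> bool" where
  "good a b c \<longleftrightarrow> (\<exists>l. (Dop ^^ l) (DW a b c) = (\<lambda>x y. 0))"

lemma PW_J:
  assumes "finite J" "\<And>j. j \<notin> J \<Longrightarrow> YW b c (int j - y - 1) = 0"
  shows "prod_coeff sW YW a b c x y =
    (\<Sum>j\<in>J. sW ((of_int (x + int j) :: complex) gchoose j) (YW a (YW b c (int j - y - 1)) (- x - 1 - int j)))"
  by (rule PW_sum[OF assms])

lemma finJ0: "finite (J0 b c y)" by (simp add: J0_def)

abbreviation (input) bet :: "int \<Rightarrow> nat \<Rightarrow> complex" where "bet x j \<equiv> (of_int (x + int j) :: complex) gchoose j"

lemma DW_add1: "DW (a1 + a2) b c = (\<lambda>x y. DW a1 b c x y + DW a2 b c x y)"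
proof (intro ext)
  fix x y
  let ?J = "J0 b c y"
  have e: "prod_coeff sW YW a' b c x y = (\<Sum>j\<in>J0 b c y. sW (bet x j) (YW a' (YW b c (int j - y - 1)) (- x - 1 - int j)))" for a'
    by (rule PW_J[OF finJ0 J0])
  have "prod_coeff sW YW (a1 + a2) b c x y = prod_coeff sW YW a1 b c x y + prod_coeff sW YW a2 b c x y"
    unfolding e by (simp add: lin_add[OF YW1] W.scale_right_distrib sum.distrib)
  moreover have "iter_coeff YW (a1 + a2) b c x y = iter_coeff YW a1 b c x y + iter_coeff YW a2 b c x y"
    by (simp add: iter_coeff_def lin_add[OF YW1])
  ultimately show "DW (a1 + a2) b c x y = DW a1 b c x y + DW a2 b c x y"
    by (simp add: DW_def algebra_simps)
qed

lemma DW_scale1: "DW (sW k a) b c = (\<lambda>x y. sW k (DW a b c x y))"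
proof (intro ext)
  fix x y
  have e: "prod_coeff sW YW a' b c x y = (\<Sum>j\<in>J0 b c y. sW (bet x j) (YW a' (YW b c (int j - y - 1)) (- x - 1 - int j)))" for a'
    by (rule PW_J[OF finJ0 J0])
  have "prod_coeff sW YW (sW k a) b c x y = sW k (prod_coeff sW YW a b c x y)"
    unfolding e by (simp add: lin_scale[OF YW1] W.scale_sum_right W.scale_left_commute mult.commute)
  moreover have "iter_coeff YW (sW k a) b c x y = sW k (iter_coeff YW a b c x y)"
    by (simp add: iter_coeff_def lin_scale[OF YW1])
  ultimately show "DW (sW k a) b c x y = sW k (DW a b c x y)"
    by (simp add: DW_def W.scale_right_diff_distrib)
qed

lemma DW_add2: "DW a (b1 + b2) c = (\<lambda>x y. DW a b1 c x y + DW a b2 c x y)"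
proof (intro ext)
  fix x y
  let ?J = "J0 b1 c y \<union> J0 b2 c y"
  have fJ: "finite ?J" by (simp add: J0_def)
  have e1: "prod_coeff sW YW a b1 c x y = (\<Sum>j\<in>?J. sW (bet x j) (YW a (YW b1 c (int j - y - 1)) (- x - 1 - int j)))"
    by (rule PW_J[OF fJ]) (use J0 in blast)
  have e2: "prod_coeff sW YW a b2 c x y = (\<Sum>j\<in>?J. sW (bet x j) (YW a (YW b2 c (int j - y - 1)) (- x - 1 - int j)))"
    by (rule PW_J[OF fJ]) (use J0 in blast)
  have e3: "prod_coeff sW YW a (b1 + b2) c x y = (\<Sum>j\<in>?J. sW (bet x j) (YW a (YW (b1 + b2) c (int j - y - 1)) (- x - 1 - int j)))"
    by (rule PW_J[OF fJ]) (use J0 in \<open>auto simp: lin_add[OF YW1]\<close>)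
  have "prod_coeff sW YW a (b1 + b2) c x y = prod_coeff sW YW a b1 c x y + prod_coeff sW YW a b2 c x y"
    unfolding e1 e2 e3 by (simp add: lin_add[OF YW1] lin_add[OF YW2] W.scale_right_distrib sum.distrib)
  moreover have "iter_coeff YW a (b1 + b2) c x y = iter_coeff YW a b1 c x y + iter_coeff YW a b2 c x y"
    by (simp add: iter_coeff_def lin_add[OF YW1] lin_add[OF YW2])
  ultimately show "DW a (b1 + b2) c x y = DW a b1 c x y + DW a b2 c x y"
    by (simp add: DW_def algebra_simps)
qed

lemma DW_scale2: "DW a (sW k b) c = (\<lambda>x y. sW k (DW a b c x y))"
proof (intro ext)
  fix x y
  have e1: "prod_coeff sW YW a b c x y = (\<Sum>j\<in>J0 b c y. sW (bet x j) (YW a (YW b c (int j - y - 1)) (- x - 1 - int j)))"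
    by (rule PW_J[OF finJ0 J0])
  have e2: "prod_coeff sW YW a (sW k b) c x y = (\<Sum>j\<in>J0 b c y. sW (bet x j) (YW a (YW (sW k b) c (int j - y - 1)) (- x - 1 - int j)))"
    by (rule PW_J[OF finJ0]) (use J0 in \<open>auto simp: lin_scale[OF YW1]\<close>)
  have "prod_coeff sW YW a (sW k b) c x y = sW k (prod_coeff sW YW a b c x y)"
    unfolding e1 e2 by (simp add: lin_scale[OF YW1] lin_scale[OF YW2] W.scale_sum_right W.scale_left_commute mult.commute)
  moreover have "iter_coeff YW a (sW k b) c x y = sW k (iter_coeff YW a b c x y)"
    by (simp add: iter_coeff_def lin_scale[OF YW1] lin_scale[OF YW2])
  ultimately show "DW a (sW k b) c x y = sW k (DW a b c x y)"
    by (simp add: DW_def W.scale_right_diff_distrib)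
qed

lemma DW_add3: "DW a b (c1 + c2) = (\<lambda>x y. DW a b c1 x y + DW a b c2 x y)"
proof (intro ext)
  fix x y
  let ?J = "J0 b c1 y \<union> J0 b c2 y"
  have fJ: "finite ?J" by (simp add: J0_def)
  have e1: "prod_coeff sW YW a b c1 x y = (\<Sum>j\<in>?J. sW (bet x j) (YW a (YW b c1 (int j - y - 1)) (- x - 1 - int j)))"
    by (rule PW_J[OF fJ]) (use J0 in blast)
  have e2: "prod_coeff sW YW a b c2 x y = (\<Sum>j\<in>?J. sW (bet x j) (YW a (YW b c2 (int j - y - 1)) (- x - 1 - int j)))"
    by (rule PW_J[OF fJ]) (use J0 in blast)
  have e3: "prod_coeff sW YW a b (c1 + c2) x y = (\<Sum>j\<in>?J. sW (bet x j) (YW a (YW b (c1 + c2) (int j - y - 1)) (- x - 1 - int j)))"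
    by (rule PW_J[OF fJ]) (use J0 in \<open>auto simp: lin_add[OF YW2]\<close>)
  have "prod_coeff sW YW a b (c1 + c2) x y = prod_coeff sW YW a b c1 x y + prod_coeff sW YW a b c2 x y"
    unfolding e1 e2 e3 by (simp add: lin_add[OF YW2] W.scale_right_distrib sum.distrib)
  moreover have "iter_coeff YW a b (c1 + c2) x y = iter_coeff YW a b c1 x y + iter_coeff YW a b c2 x y"
    by (simp add: iter_coeff_def lin_add[OF YW2])
  ultimately show "DW a b (c1 + c2) x y = DW a b c1 x y + DW a b c2 x y"
    by (simp add: DW_def algebra_simps)
qed

lemma DW_scale3: "DW a b (sW k c) = (\<lambda>x y. sW k (DW a b c x y))"
proof (intro ext)
  fix x y
  have e1: "prod_coeff sW YW a b c x y = (\<Sum>j\<in>J0 b c y. sW (bet x j) (YW a (YW b c (int j - y - 1)) (- x - 1 - int j)))"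
    by (rule PW_J[OF finJ0 J0])
  have e2: "prod_coeff sW YW a b (sW k c) x y = (\<Sum>j\<in>J0 b c y. sW (bet x j) (YW a (YW b (sW k c) (int j - y - 1)) (- x - 1 - int j)))"
    by (rule PW_J[OF finJ0]) (use J0 in \<open>auto simp: lin_scale[OF YW2]\<close>)
  have "prod_coeff sW YW a b (sW k c) x y = sW k (prod_coeff sW YW a b c x y)"
    unfolding e1 e2 by (simp add: lin_scale[OF YW2] W.scale_sum_right W.scale_left_commute mult.commute)
  moreover have "iter_coeff YW a b (sW k c) x y = sW k (iter_coeff YW a b c x y)"
    by (simp add: iter_coeff_def lin_scale[OF YW2])
  ultimately show "DW a b (sW k c) x y = sW k (DW a b c x y)"
    by (simp add: DW_def W.scale_right_diff_distrib)
qed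

lemma good_from_gens:
  assumes core: "\<And>u v u' v' u'' v''. v \<in> Hom \<Longrightarrow> v' \<in> Hom \<Longrightarrow> good (t u v) (t u' v') (t u'' v'')"
  shows "good a b c"
proof -
  have s3: "W.subspace {c. good a b c}" for a b
    unfolding good_def using W.good_subspace[of "DW a b"] DW_add3 DW_scale3 by simp
  have s2: "W.subspace {b. good a b c}" for a c
    unfolding good_def using W.good_subspace[of "\<lambda>b. DW a b c"] DW_add2 DW_scale2 by simp
  have s1: "W.subspace {a. good a b c}" for b c
    unfolding good_def using W.good_subspace[of "\<lambda>a. DW a b c"] DW_add1 DW_scale1 by simp
  have step3: "good (t u v) (t u' v') c" if "v \<in> Hom" "v' \<in> Hom" for u v u' v' c
    by (rule W_induct[where P="good (t u v) (t u' v')"]) (use core that s3 in auto)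
  have step2: "good (t u v) b c" if "v \<in> Hom" for u v b c
    by (rule W_induct[where P="\<lambda>b. good (t u v) b c"]) (use step3 that s2 in auto)
  show ?thesis
    by (rule W_induct[where P="\<lambda>a. good a b c"]) (use step2 s1 in auto)
qed

lemma wa_from_good:
  assumes "\<And>a b c. good a b c" shows "weak_assoc sW YW"
  unfolding weak_assoc_def
proof (intro allI)
  fix a b c
  obtain l where l: "(Dop ^^ l) (DW a b c) = (\<lambda>x y. 0)" using assms good_def by blast
  have e: "(Dop ^^ l) (prod_coeff sW YW a b c) = (Dop ^^ l) (iter_coeff YW a b c)"
    using l unfolding DW_def Dop_pow_diff by (auto simp: fun_eq_iff)
  show "\<exists>l. \<forall>x y. mult_binom sW l (prod_coeff sW YW a b c) x y = mult_binom sW l (iter_coeff YW a b c) x y"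
    by (intro exI[of _ l] allI) (simp add: mb_Dop[OF vsW] e)
qed

end


context smash
begin

lemma t_nz: "t a b \<noteq> 0 \<Longrightarrow> a \<noteq> 0 \<and> b \<noteq> 0" by auto
lemma YU_nz: "YU a w n \<noteq> 0 \<Longrightarrow> a \<noteq> 0 \<and> w \<noteq> 0 \<and> n < bU a w"
  using lin_zero[OF YU1, of w n] lin_zero[OF YU2, of a n] bU by auto
lemma YV_nz: "YV a w n \<noteq> 0 \<Longrightarrow> a \<noteq> 0 \<and> w \<noteq> 0 \<and> n < bV a w"
  using lin_zero[OF YV1, of w n] lin_zero[OF YV2, of a n] bV by auto

lemma finite_int_Sigma: "finite (SIGMA p:{lo..hi::int}. {f p..g p :: int})"
  by (rule finite_SigmaI) auto

context
  fixes g h :: 'g and u u' u'' :: 'u and v v' v'' :: 'v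
  assumes g: "g \<in> carrier G" "v \<in> Vg g" and h: "h \<in> carrier G" "v' \<in> Vg h"
begin

definition "ug' = act g u'"
definition "ugh'' = act g (act h u'')"

lemma gh: "g \<otimes>\<^bsub>G\<^esub> h \<in> carrier G" using mult_carrier g h by blast
lemma vv'_hom: "YV v v' n \<in> Vg (g \<otimes>\<^bsub>G\<^esub> h)" using Y_hom g h by blast
lemma act_gh: "act (g \<otimes>\<^bsub>G\<^esub> h) u'' = ugh''" unfolding ugh''_def using act_mult g h by blast

definition "IU = iter_coeff YU u ug' ugh''"
definition "IV = iter_coeff YV v v' v''"

lemma IW_conv: "iter_coeff YW (t u v) (t u' v') (t u'' v'') = T.conv IU IV"
proof (intro ext)
  fix x y
  define X where "X p q = t (YU (YU u ug' p) ugh'' q) (YV (YV v v' (- x - 2 - p)) v'' (- y - 2 - q))" for p q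
  have f1: "finite {p. t (YU u ug' p) (YV v v' (- x - 1 - 1 - p)) \<noteq> 0}"
  proof (rule finite_subset)
    show "{p. t (YU u ug' p) (YV v v' (- x - 1 - 1 - p)) \<noteq> 0} \<subseteq> {- x - 1 - bV v v' .. bU u ug'}"
    proof
      fix p assume "p \<in> {p. t (YU u ug' p) (YV v v' (- x - 1 - 1 - p)) \<noteq> 0}"
      then have 1: "YU u ug' p \<noteq> 0" and 2: "YV v v' (- x - 1 - 1 - p) \<noteq> 0" by auto
      have "p < bU u ug'" using YU_nz[OF 1] by blast
      moreover have "- x - 1 - 1 - p < bV v v'" using YV_nz[OF 2] by blast
      ultimately show "p \<in> {- x - 1 - bV v v' .. bU u ug'}" by simp
    qed
  qed simp
  have f2: "finite {(p, q). X p q \<noteq> 0}"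
  proof (rule finite_subset)
    show "{(p, q). X p q \<noteq> 0} \<subseteq> (SIGMA p:{- x - 1 - bV v v' .. bU u ug'}. {- y - 1 - bV (YV v v' (- x - 2 - p)) v'' .. bU (YU u ug' p) ugh''})"
    proof
      fix z assume "z \<in> {(p, q). X p q \<noteq> 0}"
      then obtain p q where z: "z = (p, q)" "X p q \<noteq> 0" by auto
      then have 1: "YU (YU u ug' p) ugh'' q \<noteq> 0" and 2: "YV (YV v v' (- x - 2 - p)) v'' (- y - 2 - q) \<noteq> 0"
        unfolding X_def by auto
      have 3: "YU u ug' p \<noteq> 0" "q < bU (YU u ug' p) ugh''" using YU_nz[OF 1] by auto
      have 4: "YV v v' (- x - 2 - p) \<noteq> 0" "- y - 2 - q < bV (YV v v' (- x - 2 - p)) v''" using YV_nz[OF 2] by auto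
      have "p < bU u ug'" using YU_nz[OF 3(1)] by blast
      moreover have "- x - 2 - p < bV v v'" using YV_nz[OF 4(1)] by blast
      ultimately show "z \<in> (SIGMA p:{- x - 1 - bV v v' .. bU u ug'}. {- y - 1 - bV (YV v v' (- x - 2 - p)) v'' .. bU (YU u ug' p) ugh''})"
        using z 3 4 by auto
    qed
  qed (rule finite_int_Sigma)
  have "iter_coeff YW (t u v) (t u' v') (t u'' v'') x y =
      YW (Sum_any (\<lambda>p. t (YU u ug' p) (YV v v' (- x - 1 - 1 - p)))) (t u'' v'') (- y - 1)"
    unfolding iter_coeff_def YW_t[OF g] ug'_def ..
  also have "\<dots> = Sum_any (\<lambda>p. YW (t (YU u ug' p) (YV v v' (- x - 1 - 1 - p))) (t u'' v'') (- y - 1))"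
    by (rule lin_Sum_any[OF YW1 f1])
  also have "\<dots> = Sum_any (\<lambda>p. Sum_any (\<lambda>q. X p q))"
    unfolding YW_t[OF gh vv'_hom] act_gh X_def by (simp add: algebra_simps)
  also have "\<dots> = Sum_any (\<lambda>(p, q). X p q)" by (rule Sum_any_pair[OF f2])
  also have "\<dots> = T.conv IU IV x y"
    unfolding T.conv_def
  proof (rule Sum_any.reindex_cong[symmetric, of "\<lambda>(p, q). (- p - 1, - q - 1)"])
    show "bij (\<lambda>(p::int, q::int). (- p - 1, - q - 1))"
      by (rule bij_betw_byWitness[where f'="\<lambda>(p::int, q::int). (- p - 1, - q - 1)"]) auto
    show "(\<lambda>(c, d). t (IU c d) (IV (x - c) (y - d))) \<circ> (\<lambda>(p, q). (- p - 1, - q - 1)) = (\<lambda>(p, q). X p q)"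
    proof (intro ext, clarsimp)
      fix a b :: int
      have e: "- (x - (- a - 1)) - 1 = - x - 2 - a" "- (y - (- b - 1)) - 1 = - y - 2 - b"
        "- (- a - 1) - 1 = a" "- (- b - 1) - 1 = b" by simp_all
      show "t (IU (- a - 1) (- b - 1)) (IV (x - (- a - 1)) (y - (- b - 1))) = X a b"
        by (simp only: IU_def IV_def iter_coeff_def X_def e)
    qed
  qed
  finally show "iter_coeff YW (t u v) (t u' v') (t u'' v'') x y = T.conv IU IV x y" .
qed


lemma FIN_I: "FIN IU IV"
  unfolding FIN_def
proof (intro allI)
  fix a b
  show "finite {(c, d). IU c d \<noteq> 0 \<and> IV (a - c) (b - d) \<noteq> 0}"
  proof (rule finite_subset)
    show "{(c, d). IU c d \<noteq> 0 \<and> IV (a - c) (b - d) \<noteq> 0} \<subseteq>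
      (SIGMA c:{- bU u ug' .. a + bV v v'}. {- bU (YU u ug' (- c - 1)) ugh'' .. b + bV (YV v v' (- (a - c) - 1)) v''})"
    proof
      fix z assume "z \<in> {(c, d). IU c d \<noteq> 0 \<and> IV (a - c) (b - d) \<noteq> 0}"
      then obtain c d where z: "z = (c, d)" and 1: "YU (YU u ug' (- c - 1)) ugh'' (- d - 1) \<noteq> 0"
        and 2: "YV (YV v v' (- (a - c) - 1)) v'' (- (b - d) - 1) \<noteq> 0"
        unfolding IU_def IV_def iter_coeff_def by auto
      have 3: "YU u ug' (- c - 1) \<noteq> 0" "- d - 1 < bU (YU u ug' (- c - 1)) ugh''" using YU_nz[OF 1] by auto
      have 4: "YV v v' (- (a - c) - 1) \<noteq> 0" "- (b - d) - 1 < bV (YV v v' (- (a - c) - 1)) v''" using YV_nz[OF 2] by auto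
      have "- c - 1 < bU u ug'" using YU_nz[OF 3(1)] by blast
      moreover have "- (a - c) - 1 < bV v v'" using YV_nz[OF 4(1)] by blast
      ultimately show "z \<in> (SIGMA c:{- bU u ug' .. a + bV v v'}. {- bU (YU u ug' (- c - 1)) ugh'' .. b + bV (YV v v' (- (a - c) - 1)) v''})"
        using z 3 4 by auto
    qed
  qed (rule finite_int_Sigma)
qed

definition "PU = prod_coeff sU YU u ug' ugh''"
definition "PV = prod_coeff sV YV v v' v''"
definition "AA p i = YU u (YU ug' ugh'' i) p"
definition "BB q r = YV v (YV v' v'' r) q"

lemma lin_scW: "Vector_Spaces.linear sW sW (\<lambda>z. sW c z)"
  unfolding Vector_Spaces.linear_iff using vsW by (simp add: W.scale_right_distrib W.scale_left_commute)

lemma AA_nz: "AA p i \<noteq> 0 \<Longrightarrow> i < bU ug' ugh'' \<and> p < bU u (YU ug' ugh'' i)"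
  unfolding AA_def using YU_nz by blast
lemma BB_nz: "BB q r \<noteq> 0 \<Longrightarrow> r < bV v' v'' \<and> q < bV v (YV v' v'' r)"
  unfolding BB_def using YV_nz by blast


lemma PW_conv: "prod_coeff sW YW (t u v) (t u' v') (t u'' v'') = T.conv PU PV"
proof (intro ext)
  fix x y
  define bet where "bet c j = (of_int (c + int j) :: complex) gchoose j" for c and j :: nat
  define TT where "TT p i j = t (AA p i) (BB (- x - 2 - int j - p) (int j - y - 2 - i))" for p i and j :: nat
  define Z where "Z = (\<lambda>(j, i, p). sW (bet x j) (TT p i j))"
  define N1 where "N1 = bU ug' ugh''"
  define N2 where "N2 = bV v' v''"
  define K where "K = nat (N1 + N2 + y + 2)"
  define S3 where "S3 = {(j, i, p). TT p i j \<noteq> 0}"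
  have S3_sub: "S3 \<subseteq> (SIGMA j:{..<K}. SIGMA i:{- y - 1 - N2 .. N1}.
      {- x - 1 - int j - bV v (YV v' v'' (int j - y - 2 - i)) .. bU u (YU ug' ugh'' i)})"
  proof
    fix z assume "z \<in> S3"
    then obtain j i p where z: "z = (j, i, p)" and nz: "TT p i j \<noteq> 0" unfolding S3_def by auto
    have a: "AA p i \<noteq> 0" and b: "BB (- x - 2 - int j - p) (int j - y - 2 - i) \<noteq> 0"
      using nz unfolding TT_def by auto
    have a1: "i < N1" "p < bU u (YU ug' ugh'' i)" using AA_nz[OF a] N1_def by auto
    have b1: "int j - y - 2 - i < N2" "- x - 2 - int j - p < bV v (YV v' v'' (int j - y - 2 - i))"
      using BB_nz[OF b] N2_def by auto
    have "j < K" unfolding K_def using a1 b1 by linarith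
    then show "z \<in> (SIGMA j:{..<K}. SIGMA i:{- y - 1 - N2 .. N1}.
      {- x - 1 - int j - bV v (YV v' v'' (int j - y - 2 - i)) .. bU u (YU ug' ugh'' i)})"
      using z a1 b1 by auto
  qed
  have finS3: "finite S3"
    by (rule finite_subset[OF S3_sub]) (auto intro!: finite_SigmaI)
  have inner: "YW (t u v) (YW (t u' v') (t u'' v'') (int j - y - 1)) (- x - 1 - int j)
      = Sum_any (\<lambda>i. Sum_any (\<lambda>p. TT p i j))" for j :: nat
  proof -
    define F where "F i = t (YU u' (act h u'') i) (YV v' v'' (int j - y - 1 - 1 - i))" for i
    have fF: "finite {i. F i \<noteq> 0}"
    proof (rule finite_subset)
      show "{i. F i \<noteq> 0} \<subseteq> {int j - y - 1 - N2 .. bU u' (act h u'')}"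
      proof
        fix i assume "i \<in> {i. F i \<noteq> 0}"
        then have 1: "YU u' (act h u'') i \<noteq> 0" and 2: "YV v' v'' (int j - y - 1 - 1 - i) \<noteq> 0"
          unfolding F_def by auto
        show "i \<in> {int j - y - 1 - N2 .. bU u' (act h u'')}"
          using YU_nz[OF 1] YV_nz[OF 2] N2_def by auto
      qed
    qed simp
    have "YW (t u v) (YW (t u' v') (t u'' v'') (int j - y - 1)) (- x - 1 - int j)
        = YW (t u v) (Sum_any F) (- x - 1 - int j)"
      unfolding YW_t[OF h] F_def ..
    also have "\<dots> = Sum_any (\<lambda>i. YW (t u v) (F i) (- x - 1 - int j))"
      by (rule lin_Sum_any[OF YW2 fF])
    also have "\<dots> = Sum_any (\<lambda>i. Sum_any (\<lambda>p. TT p i j))"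
    proof (rule Sum_any.cong)
      fix i
      show "YW (t u v) (F i) (- x - 1 - int j) = Sum_any (\<lambda>p. TT p i j)"
        unfolding F_def YW_t[OF g]
      proof (rule Sum_any.cong)
        fix p
        have e: "- x - 1 - int j - 1 - p = - x - 2 - int j - p" "int j - y - 1 - 1 - i = int j - y - 2 - i" by simp_all
        show "t (YU u (act g (YU u' (act h u'') i)) p) (YV v (YV v' v'' (int j - y - 1 - 1 - i)) (- x - 1 - int j - 1 - p)) = TT p i j"
          unfolding TT_def AA_def BB_def e act_Y[OF g(1)] ug'_def ugh''_def ..
      qed
    qed
    finally show ?thesis .
  qed
  have LHS: "prod_coeff sW YW (t u v) (t u' v') (t u'' v'') x y = Sum_any Z"
  proof -
    have "prod_coeff sW YW (t u v) (t u' v') (t u'' v'') x y =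
        Sum_any (\<lambda>j. sW (bet x j) (Sum_any (\<lambda>i. Sum_any (\<lambda>p. TT p i j))))"
      unfolding prod_coeff_def inner bet_def ..
    also have "\<dots> = Sum_any (\<lambda>j. sW (bet x j) (Sum_any (\<lambda>(i, p). TT p i j)))"
    proof (rule Sum_any.cong)
      fix j
      have "finite {(i, p). TT p i j \<noteq> 0}"
      proof (rule finite_subset)
        show "{(i, p). TT p i j \<noteq> 0} \<subseteq> snd ` S3" unfolding S3_def by (auto simp: image_iff)
      qed (use finS3 in simp)
      then show "sW (bet x j) (Sum_any (\<lambda>i. Sum_any (\<lambda>p. TT p i j))) = sW (bet x j) (Sum_any (\<lambda>(i, p). TT p i j))"
        by (simp add: Sum_any_pair)
    qed
    also have "\<dots> = Sum_any (\<lambda>j. Sum_any (\<lambda>(i, p). sW (bet x j) (TT p i j)))"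
    proof (rule Sum_any.cong)
      fix j
      have "finite {ip. (case ip of (i, p) \<Rightarrow> TT p i j) \<noteq> 0}"
      proof (rule finite_subset)
        show "{ip. (case ip of (i, p) \<Rightarrow> TT p i j) \<noteq> 0} \<subseteq> snd ` S3" unfolding S3_def by (auto simp: image_iff)
      qed (use finS3 in simp)
      from lin_Sum_any[OF lin_scW this]
      show "sW (bet x j) (Sum_any (\<lambda>(i, p). TT p i j)) = Sum_any (\<lambda>(i, p). sW (bet x j) (TT p i j))"
        by (simp add: case_prod_beta)
    qed
    also have "\<dots> = Sum_any Z"
    proof -
      have "finite {(j, ip). (case ip of (i, p) \<Rightarrow> sW (bet x j) (TT p i j)) \<noteq> 0}"
        by (rule finite_subset[OF _ finS3]) (auto simp: S3_def)
      from Sum_any_pair[OF this] show ?thesis unfolding Z_def by (simp add: case_prod_beta)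
    qed
    finally show ?thesis .
  qed
  define Q where "Q = (\<lambda>((c1::int, d1::int), (j1::nat, j2::nat)). sW (bet c1 j1 * bet (x - c1) j2)
     (t (AA (- c1 - 1 - int j1) (int j1 - d1 - 1)) (BB (- (x - c1) - 1 - int j2) (int j2 - (y - d1) - 1))))"
  define R where "R = (\<lambda>((p::int, i::int), (j1::nat, j2::nat)). sW (bet (- p - 1 - int j1) j1 * bet (x + p + 1 + int j1) j2)
     (TT p i (j1 + j2)))"
  define \<phi> where "\<phi> = (\<lambda>((p::int, i::int), (j1::nat, j2::nat)). ((- p - 1 - int j1, int j1 - 1 - i), (j1, j2)))"
  define \<psi> where "\<psi> = (\<lambda>((c1::int, d1::int), (j1::nat, j2::nat)). ((- c1 - 1 - int j1, int j1 - d1 - 1), (j1, j2)))"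
  have \<phi>\<psi>: "\<phi> (\<psi> z) = z" for z unfolding \<phi>_def \<psi>_def by (auto split: prod.splits)
  have \<psi>\<phi>: "\<psi> (\<phi> z) = z" for z unfolding \<phi>_def \<psi>_def by (auto split: prod.splits)
  have bij\<phi>: "bij \<phi>" by (rule bij_betw_byWitness[where f'=\<psi>]) (use \<phi>\<psi> \<psi>\<phi> in auto)
  have Q\<phi>: "Q \<circ> \<phi> = R"
  proof (intro ext, clarsimp simp: \<phi>_def)
    fix p i :: int and j1 j2 :: nat
    have e: "x - (- p - 1 - int j1) = x + p + 1 + int j1"
      "- (- p - 1 - int j1) - 1 - int j1 = p" "int j1 - (int j1 - 1 - i) - 1 = i"
      "- (x + p + 1 + int j1) - 1 - int j2 = - x - 2 - int (j1 + j2) - p"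
      "int j2 - (y - (int j1 - 1 - i)) - 1 = int (j1 + j2) - y - 2 - i" by simp_all
    show "Q ((- p - 1 - int j1, int j1 - 1 - i), j1, j2) = R ((p, i), j1, j2)"
      unfolding Q_def R_def TT_def by (simp only: e prod.case)
  qed
  have SR: "{z. R z \<noteq> 0} \<subseteq> (\<Union>(j, i, p)\<in>S3. (\<lambda>j1. ((p, i), (j1, j - j1))) ` {..j})"
  proof
    fix z assume zR: "z \<in> {z. R z \<noteq> 0}"
    obtain pi jj where z1: "z = (pi, jj)" by (rule prod.exhaust)
    obtain p i where z2: "pi = (p, i)" by (rule prod.exhaust)
    obtain j1 j2 where z3: "jj = (j1, j2)" by (rule prod.exhaust)
    have nz: "R ((p, i), (j1, j2)) \<noteq> 0" using zR z1 z2 z3 by simp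
    have "TT p i (j1 + j2) \<noteq> 0" using nz unfolding R_def by auto
    then have mem: "(j1 + j2, i, p) \<in> S3" unfolding S3_def by simp
    have "((p, i), (j1, j2)) \<in> (\<lambda>j1'. ((p, i), (j1', (j1 + j2) - j1'))) ` {..j1 + j2}"
      by (rule image_eqI[of _ _ j1]) simp_all
    then have "((p, i), (j1, j2)) \<in> (\<lambda>(j, i, p). (\<lambda>j1. ((p, i), (j1, j - j1))) ` {..j}) (j1 + j2, i, p)"
      by simp
    then show "z \<in> (\<Union>(j, i, p)\<in>S3. (\<lambda>j1. ((p, i), (j1, j - j1))) ` {..j})"
      using mem z1 z2 z3 by blast
  qed
  have finR: "finite {z. R z \<noteq> 0}"
    by (rule finite_subset[OF SR]) (use finS3 in auto)
  have finQ: "finite {z. Q z \<noteq> 0}"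
  proof (rule finite_subset)
    show "{z. Q z \<noteq> 0} \<subseteq> \<phi> ` {z. R z \<noteq> 0}"
    proof
      fix z assume zQ: "z \<in> {z. Q z \<noteq> 0}"
      have "R (\<psi> z) = Q (\<phi> (\<psi> z))" unfolding Q\<phi>[symmetric] by simp
      then have "R (\<psi> z) \<noteq> 0" using zQ \<phi>\<psi>[of z] by simp
      then have "\<phi> (\<psi> z) \<in> \<phi> ` {z. R z \<noteq> 0}" by blast
      then show "z \<in> \<phi> ` {z. R z \<noteq> 0}" using \<phi>\<psi>[of z] by simp
    qed
  qed (use finR in simp)
  have r1: "t (PU c1 d1) (PV (x - c1) (y - d1)) = Sum_any (\<lambda>(j1, j2). Q ((c1, d1), (j1, j2)))" for c1 d1
  proof -
    define f where "f j1 = sU (bet c1 j1) (AA (- c1 - 1 - int j1) (int j1 - d1 - 1))" for j1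
    define gg where "gg j2 = sV (bet (x - c1) j2) (BB (- (x - c1) - 1 - int j2) (int j2 - (y - d1) - 1))" for j2
    have PUf: "PU c1 d1 = Sum_any f" unfolding PU_def prod_coeff_def f_def AA_def bet_def ..
    have PVg: "PV (x - c1) (y - d1) = Sum_any gg" unfolding PV_def prod_coeff_def gg_def BB_def bet_def ..
    have ff: "{j1. f j1 \<noteq> 0} \<subseteq> {..<nat (N1 + d1 + 1)}"
    proof
      fix j1 assume "j1 \<in> {j1. f j1 \<noteq> 0}"
      then have "AA (- c1 - 1 - int j1) (int j1 - d1 - 1) \<noteq> 0" unfolding f_def by auto
      then show "j1 \<in> {..<nat (N1 + d1 + 1)}" using AA_nz N1_def by fastforce
    qed
    have fg: "{j2. gg j2 \<noteq> 0} \<subseteq> {..<nat (N2 + (y - d1) + 1)}"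
    proof
      fix j2 assume "j2 \<in> {j2. gg j2 \<noteq> 0}"
      then have "BB (- (x - c1) - 1 - int j2) (int j2 - (y - d1) - 1) \<noteq> 0" unfolding gg_def by auto
      then show "j2 \<in> {..<nat (N2 + (y - d1) + 1)}" using BB_nz N2_def by fastforce
    qed
    have ff': "finite {j1. f j1 \<noteq> 0}" using ff finite_subset by blast
    have fg': "finite {j2. gg j2 \<noteq> 0}" using fg finite_subset by blast
    have "t (Sum_any f) (Sum_any gg) = Sum_any (\<lambda>j1. t (f j1) (Sum_any gg))"
      by (rule T.tSum_any1[OF ff'])
    also have "\<dots> = Sum_any (\<lambda>j1. Sum_any (\<lambda>j2. t (f j1) (gg j2)))"
      by (intro Sum_any.cong T.tSum_any2[OF fg'])
    also have "\<dots> = Sum_any (\<lambda>(j1, j2). t (f j1) (gg j2))"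
    proof (rule Sum_any_pair)
      show "finite {(j1, j2). t (f j1) (gg j2) \<noteq> 0}"
        by (rule finite_subset[of _ "{j1. f j1 \<noteq> 0} \<times> {j2. gg j2 \<noteq> 0}"]) (use ff' fg' in auto)
    qed
    also have "\<dots> = Sum_any (\<lambda>(j1, j2). Q ((c1, d1), (j1, j2)))"
      unfolding f_def gg_def Q_def by (simp add: T.tscale mult.commute)
    finally show ?thesis using PUf PVg by simp
  qed
  have RHS1: "T.conv PU PV x y = Sum_any Q"
  proof -
    have "T.conv PU PV x y = Sum_any (\<lambda>(c1, d1). Sum_any (\<lambda>(j1, j2). Q ((c1, d1), (j1, j2))))"
      unfolding T.conv_def r1 ..
    also have "\<dots> = Sum_any (\<lambda>cd. Sum_any (\<lambda>jj. Q (cd, jj)))"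
      by (simp add: case_prod_beta)
    also have "\<dots> = Sum_any (\<lambda>(cd, jj). Q (cd, jj))"
    proof (rule Sum_any_pair)
      have "{(cd, jj). Q (cd, jj) \<noteq> 0} = {z. Q z \<noteq> 0}" by auto
      then show "finite {(cd, jj). Q (cd, jj) \<noteq> 0}" using finQ by simp
    qed
    finally show ?thesis by simp
  qed
  have RQ: "Sum_any Q = Sum_any R" by (rule Sum_any.reindex_cong[OF bij\<phi> Q\<phi>])
  have RHS2: "Sum_any R = Sum_any (\<lambda>pi. Sum_any (\<lambda>(j1, j2). R (pi, (j1, j2))))"
  proof -
    have "Sum_any (\<lambda>pi. Sum_any (\<lambda>jj. R (pi, jj))) = Sum_any (\<lambda>(pi, jj). R (pi, jj))"
    proof (rule Sum_any_pair)
      have "{(pi, jj). R (pi, jj) \<noteq> 0} = {z. R z \<noteq> 0}" by auto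
      then show "finite {(pi, jj). R (pi, jj) \<noteq> 0}" using finR by simp
    qed
    then show ?thesis by (simp add: case_prod_beta)
  qed
  have r5: "Sum_any (\<lambda>(j1, j2). R ((p, i), (j1, j2))) = Sum_any (\<lambda>j. sW (bet x j) (TT p i j))" for p i
  proof -
    have fin: "finite {(j1, j2). R ((p, i), (j1, j2)) \<noteq> 0}"
    proof (rule finite_subset[of _ "snd ` {z. R z \<noteq> 0}"])
      show "{(j1, j2). R ((p, i), (j1, j2)) \<noteq> 0} \<subseteq> snd ` {z. R z \<noteq> 0}"
      proof
        fix jj assume jj: "jj \<in> {(j1, j2). R ((p, i), (j1, j2)) \<noteq> 0}"
        have "R ((p, i), jj) \<noteq> 0" using jj by (cases jj) simp
        then have "((p, i), jj) \<in> {z. R z \<noteq> 0}" by simp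
        then show "jj \<in> snd ` {z. R z \<noteq> 0}" by (rule image_eqI[rotated]) simp
      qed
    qed (use finR in simp)
    have "Sum_any (\<lambda>(j1, j2). R ((p, i), (j1, j2))) = Sum_any (\<lambda>j. \<Sum>j1\<le>j. R ((p, i), (j1, j - j1)))"
      by (rule Sum_any_triangle[OF fin])
    also have "\<dots> = Sum_any (\<lambda>j. sW (bet x j) (TT p i j))"
    proof (rule Sum_any.cong)
      fix j
      have "(\<Sum>j1\<le>j. R ((p, i), (j1, j - j1))) =
          (\<Sum>j1\<le>j. sW (((of_int (- p - 1)) gchoose j1) * ((of_int (x + p + 1 + int j)) gchoose (j - j1))) (TT p i j))"
      proof (rule sum.cong[OF refl])
        fix j1 assume "j1 \<in> {..j}"
        then have j1: "j1 \<le> j" by simp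
        have e: "j1 + (j - j1) = j" "- p - 1 - int j1 + int j1 = - p - 1"
          "x + p + 1 + int j1 + int (j - j1) = x + p + 1 + int j" using j1 by auto
        show "R ((p, i), (j1, j - j1)) = sW (((of_int (- p - 1)) gchoose j1) * ((of_int (x + p + 1 + int j)) gchoose (j - j1))) (TT p i j)"
          unfolding R_def bet_def prod.case
          by (simp only: e)
      qed
      also have "\<dots> = sW (\<Sum>j1\<le>j. ((of_int (- p - 1)) gchoose j1) * ((of_int (x + p + 1 + int j)) gchoose (j - j1))) (TT p i j)"
        by (simp add: W.scale_sum_left)
      also have "(\<Sum>j1\<le>j. ((of_int (- p - 1) :: complex) gchoose j1) * ((of_int (x + p + 1 + int j)) gchoose (j - j1)))
          = (of_int (- p - 1) + of_int (x + p + 1 + int j)) gchoose j"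
        using gbinomial_Vandermonde[of "of_int (- p - 1) :: complex" "of_int (x + p + 1 + int j)" j]
        by (simp add: atLeast0AtMost)
      also have "(of_int (- p - 1) + of_int (x + p + 1 + int j) :: complex) = of_int (x + int j)"
        by simp
      finally show "(\<Sum>j1\<le>j. R ((p, i), (j1, j - j1))) = sW (bet x j) (TT p i j)"
        unfolding bet_def by simp
    qed
    finally show ?thesis .
  qed
  have RHS3: "Sum_any (\<lambda>pi. Sum_any (\<lambda>(j1, j2). R (pi, (j1, j2)))) = Sum_any Z"
  proof -
    have "Sum_any (\<lambda>pi. Sum_any (\<lambda>(j1, j2). R (pi, (j1, j2)))) =
        Sum_any (\<lambda>pi. Sum_any (\<lambda>j. sW (bet x j) (TT (fst pi) (snd pi) j)))"
    proof (rule Sum_any.cong)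
      fix pi :: "int \<times> int"
      obtain p i where pi: "pi = (p, i)" by (rule prod.exhaust)
      show "Sum_any (\<lambda>(j1, j2). R (pi, (j1, j2))) = Sum_any (\<lambda>j. sW (bet x j) (TT (fst pi) (snd pi) j))"
        unfolding pi fst_conv snd_conv by (rule r5)
    qed
    also have "\<dots> = Sum_any (\<lambda>(pi, j). sW (bet x j) (TT (fst pi) (snd pi) j))"
    proof (rule Sum_any_pair)
      show "finite {(pi, j). sW (bet x j) (TT (fst pi) (snd pi) j) \<noteq> 0}"
      proof (rule finite_subset[of _ "(\<lambda>(j, i, p). ((p, i), j)) ` S3"])
        show "{(pi, j). sW (bet x j) (TT (fst pi) (snd pi) j) \<noteq> 0} \<subseteq> (\<lambda>(j, i, p). ((p, i), j)) ` S3"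
        proof
          fix z assume zz: "z \<in> {(pi, j). sW (bet x j) (TT (fst pi) (snd pi) j) \<noteq> 0}"
          obtain pi j where z1: "z = (pi, j)" by (rule prod.exhaust)
          obtain p i where z2: "pi = (p, i)" by (rule prod.exhaust)
          have "TT p i j \<noteq> 0" using zz z1 z2 by auto
          then have "(j, i, p) \<in> S3" unfolding S3_def by simp
          then have "((p, i), j) \<in> (\<lambda>(j, i, p). ((p, i), j)) ` S3" by (rule image_eqI[rotated]) simp
          then show "z \<in> (\<lambda>(j, i, p). ((p, i), j)) ` S3" using z1 z2 by simp
        qed
      qed (use finS3 in simp)
    qed
    also have "\<dots> = Sum_any Z"
    proof (rule Sum_any.reindex_cong[of "\<lambda>(j, i, p). ((p, i), j)"])
      show "bij (\<lambda>(j::nat, i::int, p::int). ((p, i), j))"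
        by (rule bij_betw_byWitness[where f'="\<lambda>((p, i), j). (j, i, p)"]) auto
      show "(\<lambda>(pi, j). sW (bet x j) (TT (fst pi) (snd pi) j)) \<circ> (\<lambda>(j, i, p). ((p, i), j)) = Z"
        unfolding Z_def by (intro ext) (simp add: case_prod_beta)
    qed
    finally show ?thesis .
  qed
  show "prod_coeff sW YW (t u v) (t u' v') (t u'' v'') x y = T.conv PU PV x y"
    unfolding LHS RHS1 RQ RHS2 RHS3 ..
qed

end

end


context smash
begin

context
  fixes g h :: 'g and u u' u'' :: 'u and v v' v'' :: 'v
  assumes g: "g \<in> carrier G" "v \<in> Vg g" and h: "h \<in> carrier G" "v' \<in> Vg h"
begin

lemma FIN_P: "FIN (PU g h u u' u'') (PV v v' v'')"
  unfolding FIN_def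
proof (intro allI)
  fix a b
  let ?ug' = "ug' g u'" and ?ugh'' = "ugh'' g h u''"
  define N1 where "N1 = bU ?ug' ?ugh''"
  define N2 where "N2 = bV v' v''"
  define lo where "lo j d = - 1 - int j - bU u (YU ?ug' ?ugh'' (int j - d - 1))" for j d
  define hi where "hi j' d = a + 1 + int j' + bV v (YV v' v'' (int j' - (b - d) - 1))" for j' d
  let ?B = "\<Union>d\<in>{- N1 .. b + N2}. \<Union>j\<in>{..<nat (N1 + d + 1)}. \<Union>j'\<in>{..<nat (N2 + b - d + 1)}. {lo j d .. hi j' d} \<times> {d}"
  show "finite {(c, d). PU g h u u' u'' c d \<noteq> 0 \<and> PV v v' v'' (a - c) (b - d) \<noteq> 0}"
  proof (rule finite_subset)
    show "finite ?B" by (intro finite_UN_I) auto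
    show "{(c, d). PU g h u u' u'' c d \<noteq> 0 \<and> PV v v' v'' (a - c) (b - d) \<noteq> 0} \<subseteq> ?B"
    proof
      fix z assume z: "z \<in> {(c, d). PU g h u u' u'' c d \<noteq> 0 \<and> PV v v' v'' (a - c) (b - d) \<noteq> 0}"
      obtain c d where cd: "z = (c, d)" by (rule prod.exhaust)
      have p1: "PU g h u u' u'' c d \<noteq> 0" and p2: "PV v v' v'' (a - c) (b - d) \<noteq> 0" using z cd by auto
      obtain j where j: "AA g h u u' u'' (- c - 1 - int j) (int j - d - 1) \<noteq> 0"
      proof (rule ccontr)
        assume "\<not> thesis"
        then have "\<forall>j. AA g h u u' u'' (- c - 1 - int j) (int j - d - 1) = 0" using that by blast
        then have "PU g h u u' u'' c d = 0" unfolding PU_def[OF g h] prod_coeff_def AA_def[OF g h] by simp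
        then show False using p1 by simp
      qed
      obtain j' where j': "BB v v' v'' (- (a - c) - 1 - int j') (int j' - (b - d) - 1) \<noteq> 0"
      proof (rule ccontr)
        assume "\<not> thesis"
        then have "\<forall>j'. BB v v' v'' (- (a - c) - 1 - int j') (int j' - (b - d) - 1) = 0" using that by blast
        then have "PV v v' v'' (a - c) (b - d) = 0" unfolding PV_def[OF g h] prod_coeff_def BB_def[OF g h] by simp
        then show False using p2 by simp
      qed
      have A1: "int j - d - 1 < N1" "- c - 1 - int j < bU u (YU ?ug' ?ugh'' (int j - d - 1))"
        using AA_nz[OF g h j] N1_def by auto
      have B1: "int j' - (b - d) - 1 < N2" "- (a - c) - 1 - int j' < bV v (YV v' v'' (int j' - (b - d) - 1))"
        using BB_nz[OF g h j'] N2_def by auto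
      have d: "d \<in> {- N1 .. b + N2}" using A1 B1 by auto
      have jj: "j \<in> {..<nat (N1 + d + 1)}" using A1 by auto
      have jj': "j' \<in> {..<nat (N2 + b - d + 1)}" using B1 by auto
      have "z \<in> {lo j d .. hi j' d} \<times> {d}" using cd A1 B1 unfolding lo_def hi_def by auto
      then show "z \<in> ?B" using d jj jj' by blast
    qed
  qed
qed

lemma core_good: "good (t u v) (t u' v') (t u'' v'')"
proof -
  let ?ug' = "ug' g u'" and ?ugh'' = "ugh'' g h u''"
  obtain l1 where l1: "\<forall>x y. mult_binom sU l1 (prod_coeff sU YU u ?ug' ?ugh'') x y = mult_binom sU l1 (iter_coeff YU u ?ug' ?ugh'') x y"
    using waU unfolding weak_assoc_def by blast
  obtain l2 where l2: "\<forall>x y. mult_binom sV l2 (prod_coeff sV YV v v' v'') x y = mult_binom sV l2 (iter_coeff YV v v' v'') x y"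
    using waV unfolding weak_assoc_def by blast
  have e1: "(Dop ^^ l1) (PU g h u u' u'') = (Dop ^^ l1) (IU g h u u' u'')"
    using l1 unfolding PU_def[OF g h] IU_def[OF g h] mb_Dop[OF vsU] by (auto simp: fun_eq_iff)
  have e2: "(Dop ^^ l2) (PV v v' v'') = (Dop ^^ l2) (IV v v' v'')"
    using l2 unfolding PV_def[OF g h] IV_def[OF g h] mb_Dop[OF vsV] by (auto simp: fun_eq_iff)
  have "(Dop ^^ (l1 + l2)) (prod_coeff sW YW (t u v) (t u' v') (t u'' v''))
      = (Dop ^^ (l1 + l2)) (T.conv (PU g h u u' u'') (PV v v' v''))"
    using PW_conv[OF g h] by simp
  also have "\<dots> = T.conv ((Dop ^^ l1) (PU g h u u' u'')) ((Dop ^^ l2) (PV v v' v''))"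
    by (rule T.conv_Dop_pow[OF FIN_P])
  also have "\<dots> = T.conv ((Dop ^^ l1) (IU g h u u' u'')) ((Dop ^^ l2) (IV v v' v''))"
    using e1 e2 by simp
  also have "\<dots> = (Dop ^^ (l1 + l2)) (T.conv (IU g h u u' u'') (IV v v' v''))"
    by (rule T.conv_Dop_pow[OF FIN_I[OF g h], symmetric])
  also have "\<dots> = (Dop ^^ (l1 + l2)) (iter_coeff YW (t u v) (t u' v') (t u'' v''))"
    using IW_conv[OF g h] by simp
  finally have "(Dop ^^ (l1 + l2)) (prod_coeff sW YW (t u v) (t u' v') (t u'' v''))
      = (Dop ^^ (l1 + l2)) (iter_coeff YW (t u v) (t u' v') (t u'' v''))" .
  then have "(Dop ^^ (l1 + l2)) (DW (t u v) (t u' v') (t u'' v'')) = (\<lambda>x y. 0)"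
    unfolding DW_def Dop_pow_diff by (simp add: fun_eq_iff)
  then show ?thesis unfolding good_def by blast
qed

end

lemma waW: "weak_assoc sW YW"
proof (rule wa_from_good)
  fix a b c
  show "good a b c"
  proof (rule good_from_gens)
    fix u v u' v' u'' v''
    assume "v \<in> Hom" "v' \<in> Hom"
    then obtain g h where "g \<in> carrier G" "v \<in> Vg g" "h \<in> carrier G" "v' \<in> Vg h"
      unfolding Hom_def by blast
    then show "good (t u v) (t u' v') (t u'' v'')" by (rule core_good)
  qed
qed

lemma nvaW: "nva sW YW (t vacU vacV)"
  unfolding nva_def
proof (intro conjI allI impI)
  show "vector_space sW" by (rule vsW)
  show "bilin sW sW sW (\<lambda>u v. YW u v n)" for n using sm by (simp add: is_smash_Y_def)
  show "truncated YW" unfolding truncated_def using truncW by blast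
  show "YW (t vacU vacV) v n = (if n = - 1 then v else 0)" for v n by (rule vacWl)
  show "0 \<le> n \<Longrightarrow> YW v (t vacU vacV) n = 0" for v n by (rule vacWr)
  show "YW v (t vacU vacV) (- 1) = v" for v by (rule vacWr1)
  show "weak_assoc sW YW" by (rule waW)
qed

end


theorem corollary2p17:
  fixes G :: "('g, 'b) monoid_scheme"
    and sU :: "complex \<Rightarrow> 'u::ab_group_add \<Rightarrow> 'u" and YU :: "'u \<Rightarrow> 'u \<Rightarrow> int \<Rightarrow> 'u" and vacU :: 'u
    and act :: "'g \<Rightarrow> 'u \<Rightarrow> 'u"
    and sV :: "complex \<Rightarrow> 'v::ab_group_add \<Rightarrow> 'v" and YV :: "'v \<Rightarrow> 'v \<Rightarrow> int \<Rightarrow> 'v" and vacV :: 'v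
    and Vg :: "'g \<Rightarrow> 'v set"
    and sW :: "complex \<Rightarrow> 'w::ab_group_add \<Rightarrow> 'w" and t :: "'u \<Rightarrow> 'v \<Rightarrow> 'w"
    and YW :: "'w \<Rightarrow> 'w \<Rightarrow> int \<Rightarrow> 'w"
  assumes "group G"
    and "nva sU YU vacU"
    and "nva_group_action G sU YU vacU act"
    and "nva_G_graded G sV YV vacV Vg"
    and "nva_irreducible sU YU vacU"
    and "nva_irreducible sV YV vacV"
    and "countable_dim sU"
    and "is_tensor_product sU sV sW t"
    and "is_smash_Y G act YU YV Vg sW t YW"
  shows "nva_irreducible sW YW (t vacU vacV)"
proof -
  interpret S: smash G sU YU vacU act sV YV vacV Vg sW t YW
    by (rule smash.intro) (rule assms)+
  show ?thesis unfolding nva_irreducible_def using S.nvaW S.irrW by blast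
qed

end
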